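(* Let $1\leq k<n$ and let $G$ be a graph of order $n$. Then $q_{k+1}(G)=n-2$ if and only if the complement $\overline{G}$ has at least $k$ balanced bipartite components or at least $k+1$ bipartite components.
   Context: All graphs are finite and simple. For a graph $G$ with adjacency matrix $A$ and diagonal degree matrix $D$, the signless Laplacian is $Q(G)=A+D$; its eigenvalues are denoted $q_1(G)\geq q_2(G)\geq\cdots\geq q_n(G)$. $\overline{G}$ denotes the complement of $G$. A connected bipartite graph is called balanced if its two vertex classes have equal size, and unbalanced otherwise; an isolated vertex is considered to be an (unbalanced) bipartite component with one empty vertex class. A bipartite component of a graph means a connected component that is bipartite (including isolated vertices). *)

theory Defs
  imports "Jordan_Normal_Form.Char_Poly" "HOL-Computational_Algebra.Polynomial"
    "HOL-Library.Multiset"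
begin

definition simple_graph :: "nat \<Rightarrow> (nat \<Rightarrow> nat \<Rightarrow> bool) \<Rightarrow> bool" where
  "simple_graph n E \<longleftrightarrow> (\<forall>i j. E i j \<longrightarrow> i < n \<and> j < n \<and> i \<noteq> j \<and> E j i)"

definition complement :: "nat \<Rightarrow> (nat \<Rightarrow> nat \<Rightarrow> bool) \<Rightarrow> nat \<Rightarrow> nat \<Rightarrow> bool" where
  "complement n E i j \<longleftrightarrow> i < n \<and> j < n \<and> i \<noteq> j \<and> \<not> E i j"

definition degree :: "nat \<Rightarrow> (nat \<Rightarrow> nat \<Rightarrow> bool) \<Rightarrow> nat \<Rightarrow> nat" where
  "degree n E i = card {j \<in> {0..<n}. E i j}"

definition signless_laplacian :: "nat \<Rightarrow> (nat \<Rightarrow> nat \<Rightarrow> bool) \<Rightarrow> real mat" where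
  "signless_laplacian n E = mat n n (\<lambda>(i, j).
     (if E i j then 1 else 0) + (if i = j then real (degree n E i) else 0))"

text \<open>Eigenvalues of Q (roots of the characteristic polynomial, with multiplicity),
  sorted non-increasingly; q_i is the i-th one (1-based).\<close>
definition q_eig :: "nat \<Rightarrow> (nat \<Rightarrow> nat \<Rightarrow> bool) \<Rightarrow> nat \<Rightarrow> real" where
  "q_eig n E i =
     rev (sorted_list_of_multiset (proots (char_poly (signless_laplacian n E)))) ! (i - 1)"

definition components :: "nat \<Rightarrow> (nat \<Rightarrow> nat \<Rightarrow> bool) \<Rightarrow> nat set set" where
  "components n E = {{u. E\<^sup>*\<^sup>* v u} | v. v < n}"

definition bipartition :: "(nat \<Rightarrow> nat \<Rightarrow> bool) \<Rightarrow> nat set \<Rightarrow> nat set \<Rightarrow> nat set \<Rightarrow> bool" where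
  "bipartition E C X Y \<longleftrightarrow> X \<union> Y = C \<and> X \<inter> Y = {} \<and>
     (\<forall>x\<in>X. \<forall>y\<in>X. \<not> E x y) \<and> (\<forall>x\<in>Y. \<forall>y\<in>Y. \<not> E x y)"

definition bipartite_comp :: "(nat \<Rightarrow> nat \<Rightarrow> bool) \<Rightarrow> nat set \<Rightarrow> bool" where
  "bipartite_comp E C \<longleftrightarrow> (\<exists>X Y. bipartition E C X Y)"

text \<open>Connected bipartite graphs have a unique bipartition, so this is well defined.\<close>
definition balanced_comp :: "(nat \<Rightarrow> nat \<Rightarrow> bool) \<Rightarrow> nat set \<Rightarrow> bool" where
  "balanced_comp E C \<longleftrightarrow> (\<exists>X Y. bipartition E C X Y \<and> card X = card Y)"

end

theory Submission
  imports Defs "HOL-Computational_Algebra.Fundamental_Theorem_Algebra" "HOL-Library.Multiset"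
begin

lemma homog:
  fixes f :: "'i \<Rightarrow> 'j \<Rightarrow> real"
  assumes "finite I" "finite J" "card I < card J"
  shows "\<exists>c. (\<exists>j\<in>J. c j \<noteq> 0) \<and> (\<forall>i\<in>I. (\<Sum>j\<in>J. f i j * c j) = 0)"
  using assms
proof (induction I arbitrary: J f rule: finite_induct)
  case empty
  then have "J \<noteq> {}" by auto
  then show ?case by (intro exI[of _ "\<lambda>j. 1"]) auto
next
  case (insert i0 I)
  show ?case
  proof (cases "\<forall>j\<in>J. f i0 j = 0")
    case True
    from insert.prems have "card I < card J" using insert.hyps by simp
    from insert.IH[OF insert.prems(1) this, of f] obtain c where
      c: "(\<exists>j\<in>J. c j \<noteq> 0)" "\<forall>i\<in>I. (\<Sum>j\<in>J. f i j * c j) = 0" by blast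
    show ?thesis using c True by (intro exI[of _ c]) auto
  next
    case False
    then obtain j0 where j0: "j0 \<in> J" "f i0 j0 \<noteq> 0" by blast
    define J' where "J' = J - {j0}"
    define g where "g i j = f i j - f i j0 * f i0 j / f i0 j0" for i j
    have fJ': "finite J'" using insert.prems unfolding J'_def by auto
    have cJ': "card J' = card J - 1" unfolding J'_def using j0 insert.prems by auto
    have "card I < card J'" using insert.prems insert.hyps cJ' by simp
    from insert.IH[OF fJ' this, of g] obtain c' where
      c': "(\<exists>j\<in>J'. c' j \<noteq> 0)" "\<forall>i\<in>I. (\<Sum>j\<in>J'. g i j * c' j) = 0" by blast
    define c where "c j = (if j = j0 then - (\<Sum>j\<in>J'. f i0 j * c' j) / f i0 j0 else c' j)" for j
    have split: "(\<Sum>j\<in>J. f i j * c j) = f i j0 * c j0 + (\<Sum>j\<in>J'. f i j * c' j)" for i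
    proof -
      have "(\<Sum>j\<in>J. f i j * c j) = f i j0 * c j0 + (\<Sum>j\<in>J'. f i j * c j)"
        unfolding J'_def using j0 insert.prems by (simp add: sum.remove)
      also have "(\<Sum>j\<in>J'. f i j * c j) = (\<Sum>j\<in>J'. f i j * c' j)"
        by (rule sum.cong) (auto simp: c_def J'_def)
      finally show ?thesis .
    qed
    have "\<forall>i\<in>insert i0 I. (\<Sum>j\<in>J. f i j * c j) = 0"
    proof
      fix i assume i: "i \<in> insert i0 I"
      show "(\<Sum>j\<in>J. f i j * c j) = 0"
      proof (cases "i = i0")
        case True
        then show ?thesis unfolding split using j0 by (simp add: c_def)
      next
        case False
        then have "i \<in> I" using i by auto
        with c' have "(\<Sum>j\<in>J'. g i j * c' j) = 0" by auto
        moreover have "(\<Sum>j\<in>J'. g i j * c' j) = (\<Sum>j\<in>J'. f i j * c' j)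
            - f i j0 / f i0 j0 * (\<Sum>j\<in>J'. f i0 j * c' j)"
          unfolding g_def by (simp add: sum_distrib_left sum_subtractf algebra_simps)
        ultimately show ?thesis unfolding split using j0 by (simp add: c_def)
      qed
    qed
    moreover have "\<exists>j\<in>J. c j \<noteq> 0" using c' by (auto simp: c_def J'_def)
    ultimately show ?thesis by blast
  qed
qed

definition mv :: "(nat \<Rightarrow> nat \<Rightarrow> real) \<Rightarrow> nat \<Rightarrow> (nat \<Rightarrow> real) \<Rightarrow> nat \<Rightarrow> real" where
  "mv a n x = (\<lambda>i. \<Sum>j<n. a i j * x j)"

definition dot :: "nat \<Rightarrow> (nat \<Rightarrow> real) \<Rightarrow> (nat \<Rightarrow> real) \<Rightarrow> real" where
  "dot n x y = (\<Sum>i<n. x i * y i)"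

definition supp :: "nat \<Rightarrow> (nat \<Rightarrow> real) \<Rightarrow> bool" where
  "supp n x \<longleftrightarrow> (\<forall>i\<ge>n. x i = 0)"

lemma dot_comm: "dot n x y = dot n y x"
  unfolding dot_def by (simp add: mult.commute)

lemma dot_add_left: "dot n (\<lambda>i. x i + y i) z = dot n x z + dot n y z"
  unfolding dot_def by (simp add: algebra_simps sum.distrib)

lemma dot_scale_left: "dot n (\<lambda>i. c * x i) z = c * dot n x z"
  unfolding dot_def by (simp add: algebra_simps sum_distrib_left)

lemma dot_scale_div: "dot n (\<lambda>i. c * x i / d) z = c * dot n x z / d"
  unfolding dot_def by (simp add: sum_divide_distrib sum_distrib_left algebra_simps)

lemma dot_sum_left: "dot n (\<lambda>i. \<Sum>j\<in>S. f j i) z = (\<Sum>j\<in>S. dot n (f j) z)"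
  unfolding dot_def by (simp add: sum_distrib_right sum.swap[of _ S])

lemma dot_self_ge0: "dot n x x \<ge> 0"
  unfolding dot_def by (intro sum_nonneg) auto

lemma dot_self_eq0: assumes "supp n x" "dot n x x = 0" shows "x = (\<lambda>_. 0)"
proof
  fix i
  show "x i = 0"
  proof (cases "i < n")
    case True
    have "\<forall>i\<in>{..<n}. x i * x i = 0"
      using assms(2) unfolding dot_def by (subst sum_nonneg_eq_0_iff[symmetric]) auto
    then show ?thesis using True by auto
  next
    case False then show ?thesis using assms(1) unfolding supp_def by auto
  qed
qed

lemma dot_self_pos: assumes "supp n x" "x \<noteq> (\<lambda>_. 0)" shows "dot n x x > 0"
  using dot_self_ge0[of n x] dot_self_eq0[OF assms(1)] assms(2) by force

lemma supp_add: "supp n x \<Longrightarrow> supp n y \<Longrightarrow> supp n (\<lambda>i. x i + y i)"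
  unfolding supp_def by auto
lemma supp_scale: "supp n x \<Longrightarrow> supp n (\<lambda>i. c * x i)"
  unfolding supp_def by auto
lemma supp_sum: "(\<And>j. j \<in> S \<Longrightarrow> supp n (f j)) \<Longrightarrow> supp n (\<lambda>i. \<Sum>j\<in>S. f j i)"
  unfolding supp_def by auto

lemma orth_indep:
  assumes fin: "finite J"
    and W: "\<And>j. j \<in> J \<Longrightarrow> supp n (w j) \<and> w j \<noteq> (\<lambda>_. 0)"
    and orth: "\<And>j l. j \<in> J \<Longrightarrow> l \<in> J \<Longrightarrow> j \<noteq> l \<Longrightarrow> dot n (w j) (w l) = 0"
    and z: "\<And>i. i < n \<Longrightarrow> (\<Sum>j\<in>J. c j * w j i) = 0"
    and l: "l \<in> J"
  shows "c l = 0"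
proof -
  have "dot n (\<lambda>i. \<Sum>j\<in>J. c j * w j i) (w l) = 0"
    unfolding dot_def using z by simp
  moreover have "dot n (\<lambda>i. \<Sum>j\<in>J. c j * w j i) (w l) = (\<Sum>j\<in>J. c j * dot n (w j) (w l))"
    by (simp add: dot_sum_left dot_scale_left)
  moreover have "(\<Sum>j\<in>J. c j * dot n (w j) (w l)) = c l * dot n (w l) (w l)"
    using l fin orth by (subst sum.remove[of _ l]) (auto intro!: sum.neutral)
  ultimately have "c l * dot n (w l) (w l) = 0" by simp
  moreover have "dot n (w l) (w l) > 0" using W[OF l] dot_self_pos by blast
  ultimately show ?thesis by simp
qed

lemma poly_of_real_mult:
  "poly (map_poly complex_of_real (p * q)) z = poly (map_poly complex_of_real p) z * poly (map_poly complex_of_real q) z"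
  by (induct p) (simp_all add: of_real_hom.map_poly_hom_add of_real_hom.map_poly_hom_smult
      of_real_hom.map_poly_pCons_hom algebra_simps)

lemma poly_of_real_add:
  "poly (map_poly complex_of_real (p + q)) z = poly (map_poly complex_of_real p) z + poly (map_poly complex_of_real q) z"
  by (simp add: of_real_hom.map_poly_hom_add)

lemma dot_sq_expand: "dot n (\<lambda>i. m i - x * w i) (\<lambda>i. m i - x * w i) =
        dot n m m - 2 * x * dot n m w + x^2 * dot n w w"
proof -
  have "(\<Sum>i<n. (m i - x * w i) * (m i - x * w i)) =
     (\<Sum>i<n. m i * m i - 2 * x * (m i * w i) + x^2 * (w i * w i))"
    by (rule sum.cong) (simp_all add: power2_eq_square left_diff_distrib right_diff_distrib)
  then show ?thesis unfolding dot_def by (simp add: sum.distrib sum_subtractf sum_distrib_left)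
qed

locale symm =
  fixes n :: nat and a :: "nat \<Rightarrow> nat \<Rightarrow> real"
  assumes sym: "\<And>i j. a i j = a j i"
    and zero_out: "\<And>i j. n \<le> i \<Longrightarrow> a i j = 0"
begin

abbreviation M where "M \<equiv> mv a n"

lemma M_supp: "supp n (M x)"
  unfolding supp_def mv_def using zero_out by auto

lemma M_add: "M (\<lambda>i. x i + y i) = (\<lambda>i. M x i + M y i)"
  unfolding mv_def by (simp add: algebra_simps sum.distrib)

lemma M_scale: "M (\<lambda>i. c * x i) = (\<lambda>i. c * M x i)"
  unfolding mv_def by (simp add: algebra_simps sum_distrib_left)

lemma M_zero: "M (\<lambda>_. 0) = (\<lambda>_. 0)"
  unfolding mv_def by simp

lemma M_sum: "M (\<lambda>k. \<Sum>j\<in>S. f j k) = (\<lambda>i. \<Sum>j\<in>S. M (f j) i)"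
  unfolding mv_def by (simp add: sum_distrib_left sum.swap[of _ S])

lemma dot_M: "dot n x (M y) = dot n (M x) y"
proof -
  have "dot n x (M y) = (\<Sum>i<n. \<Sum>j<n. x i * a i j * y j)"
    unfolding dot_def mv_def by (simp add: sum_distrib_left algebra_simps)
  also have "\<dots> = (\<Sum>j<n. \<Sum>i<n. x i * a i j * y j)" by (rule sum.swap)
  also have "\<dots> = (\<Sum>j<n. (\<Sum>i<n. a j i * x i) * y j)"
    by (intro sum.cong refl) (simp add: sum_distrib_right sum_distrib_left sym[of _ j for j] algebra_simps)
  also have "\<dots> = dot n (M x) y"
    unfolding dot_def mv_def by simp
  finally show ?thesis .
qed

lemma Mpow_supp: "supp n u \<Longrightarrow> supp n ((M ^^ j) u)"
  by (induction j) (auto simp: M_supp)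

definition papp :: "real poly \<Rightarrow> (nat \<Rightarrow> real) \<Rightarrow> nat \<Rightarrow> real" where
  "papp p u = (\<lambda>i. \<Sum>j\<le>Polynomial.degree p. coeff p j * (M ^^ j) u i)"

lemma papp_bound: assumes "Polynomial.degree p < N"
  shows "papp p u = (\<lambda>i. \<Sum>j<N. coeff p j * (M ^^ j) u i)"
proof
  fix i
  show "papp p u i = (\<Sum>j<N. coeff p j * (M ^^ j) u i)"
    unfolding papp_def
    by (rule sum.mono_neutral_left) (use assms in \<open>auto simp: coeff_eq_0\<close>)
qed

lemma papp_pCons: "papp (pCons c p) u = (\<lambda>i. c * u i + M (papp p u) i)"
proof -
  define N where "N = Suc (Polynomial.degree p)"
  have d1: "Polynomial.degree (pCons c p) < Suc N" unfolding N_def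
    by (metis degree_pCons_le le_imp_less_Suc)
  have "papp (pCons c p) u = (\<lambda>i. \<Sum>j<Suc N. coeff (pCons c p) j * (M ^^ j) u i)"
    by (rule papp_bound[OF d1])
  also have "\<dots> = (\<lambda>i. c * u i + (\<Sum>j<N. coeff p j * (M ^^ Suc j) u i))"
    by (rule ext, subst sum.lessThan_Suc_shift) simp
  also have "\<dots> = (\<lambda>i. c * u i + M (papp p u) i)"
  proof -
    have "papp p u = (\<lambda>i. \<Sum>j<N. coeff p j * (M ^^ j) u i)"
      by (rule papp_bound) (simp add: N_def)
    then have "M (papp p u) = (\<lambda>i. \<Sum>j<N. M (\<lambda>k. coeff p j * (M ^^ j) u k) i)"
      using M_sum[of "\<lambda>j k. coeff p j * (M ^^ j) u k" "{..<N}"] by simp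
    then show ?thesis by (simp add: M_scale)
  qed
  finally show ?thesis .
qed

lemma papp_0: "papp 0 u = (\<lambda>_. 0)"
  unfolding papp_def by simp

lemma papp_add: "papp (p + q) u = (\<lambda>i. papp p u i + papp q u i)"
proof -
  define N where "N = Suc (max (Polynomial.degree p) (Polynomial.degree q))"
  have "Polynomial.degree (p + q) < N" unfolding N_def
    using degree_add_le_max[of p q] by linarith
  then show ?thesis
    using papp_bound[of p N u] papp_bound[of q N u] papp_bound[of "p+q" N u]
    by (simp add: N_def algebra_simps sum.distrib)
qed

lemma papp_smult: "papp (Polynomial.smult c p) u = (\<lambda>i. c * papp p u i)"
  unfolding papp_def by (simp add: sum_distrib_left algebra_simps)

lemma papp_mult: "papp (p * q) u = papp p (papp q u)"
proof (induction p)
  case 0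
  then show ?case by (simp add: papp_0)
next
  case (pCons c p)
  have "papp (pCons c p * q) u = papp (Polynomial.smult c q + pCons 0 (p * q)) u" by simp
  also have "\<dots> = (\<lambda>i. c * papp q u i + M (papp (p * q) u) i)"
    by (simp add: papp_add papp_smult papp_pCons)
  also have "\<dots> = papp (pCons c p) (papp q u)"
    by (simp add: papp_pCons pCons.IH)
  finally show ?case .
qed

lemma papp_monom: "papp (monom c j) u = (\<lambda>i. c * (M ^^ j) u i)"
proof -
  have "Polynomial.degree (monom c j) < Suc j"
    by (meson degree_monom_le le_imp_less_Suc)
  from papp_bound[OF this, of u] show ?thesis
    by (simp add: coeff_monom lessThan_Suc_atMost if_distrib[of "\<lambda>x. x * _"] cong: if_cong)
qed

lemma papp_sum: "finite S \<Longrightarrow> papp (\<Sum>j\<in>S. f j) u = (\<lambda>i. \<Sum>j\<in>S. papp (f j) u i)"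
  by (induction S rule: finite_induct) (simp_all add: papp_0 papp_add)

lemma papp_const: "papp [:c:] u = (\<lambda>i. c * u i)"
  by (simp add: papp_pCons papp_0 M_zero)

lemma papp_lin: "papp [:d, 1:] u = (\<lambda>i. d * u i + M u i)"
  by (simp add: papp_pCons papp_0 M_zero)

lemma papp_quad: "papp [:d, e, 1:] u = (\<lambda>i. d * u i + (e * M u i + M (M u) i))"
  by (simp add: papp_pCons papp_0 M_zero M_add M_scale)

definition Inv :: "(nat \<Rightarrow> real) set \<Rightarrow> bool" where
  "Inv W \<longleftrightarrow> (\<forall>x\<in>W. supp n x) \<and> (\<forall>x\<in>W. \<forall>y\<in>W. (\<lambda>i. x i + y i) \<in> W) \<and>
     (\<forall>c. \<forall>x\<in>W. (\<lambda>i. c * x i) \<in> W) \<and> (\<forall>x\<in>W. M x \<in> W)"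

lemma papp_Inv: assumes "Inv W" "u \<in> W" shows "papp p u \<in> W"
proof (induction p)
  case 0
  have "(\<lambda>i. 0 * u i) \<in> W" using assms unfolding Inv_def by blast
  then show ?case by (simp add: papp_0)
next
  case (pCons c p)
  have 1: "(\<lambda>i. c * u i) \<in> W" "M (papp p u) \<in> W" using assms pCons.IH unfolding Inv_def by blast+
  have "\<forall>x\<in>W. \<forall>y\<in>W. (\<lambda>i. x i + y i) \<in> W" using assms unfolding Inv_def by blast
  from this[rule_format, OF 1] show ?case unfolding papp_pCons .
qed

lemma Inv_zero: assumes "Inv W" "u \<in> W" shows "(\<lambda>_. 0) \<in> W"
proof -
  have "(\<lambda>i. 0 * u i) \<in> W" using assms unfolding Inv_def by blast
  then show ?thesis by simp
qed

lemma eigvec_in_inv: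
  assumes W: "Inv W" and u: "u \<in> W" "u \<noteq> (\<lambda>_. 0)"
  shows "\<exists>w\<in>W. w \<noteq> (\<lambda>_. 0) \<and> (\<exists>r. M w = (\<lambda>i. r * w i))"
proof -
  have Wsupp: "\<And>x. x \<in> W \<Longrightarrow> supp n x" using W unfolding Inv_def by blast
  define Good where "Good q \<longleftrightarrow> q \<noteq> 0 \<and> (\<exists>u\<in>W. u \<noteq> (\<lambda>_. 0) \<and> papp q u = (\<lambda>_. 0))" for q
  have "\<exists>c. (\<exists>j\<in>{..n}. c j \<noteq> 0) \<and> (\<forall>i\<in>{..<n}. (\<Sum>j\<in>{..n}. (M ^^ j) u i * c j) = 0)"
    by (rule homog) auto
  then obtain c where c: "\<exists>j\<in>{..n}. c j \<noteq> 0" "\<forall>i\<in>{..<n}. (\<Sum>j\<in>{..n}. (M ^^ j) u i * c j) = 0"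
    by blast
  define p0 where "p0 = (\<Sum>j\<in>{..n}. monom (c j) j)"
  have cp0: "coeff p0 j = c j" if "j \<le> n" for j
    using that unfolding p0_def by (simp add: coeff_sum coeff_monom)
  have "p0 \<noteq> 0" using c(1) cp0 by force
  moreover have "papp p0 u = (\<lambda>_. 0)"
  proof
    fix i
    have "papp p0 u i = (\<Sum>j\<in>{..n}. c j * (M ^^ j) u i)"
      unfolding p0_def by (simp add: papp_sum papp_monom)
    also have "\<dots> = 0"
    proof (cases "i < n")
      case True
      then show ?thesis using c(2) by (simp add: mult.commute)
    next
      case False
      then show ?thesis using Mpow_supp[OF Wsupp[OF u(1)]] unfolding supp_def by simp
    qed
    finally show "papp p0 u i = 0" .
  qed
  ultimately have "Good p0" unfolding Good_def using u by blast
  from ex_has_least_nat[of Good p0 Polynomial.degree, OF this] obtain p where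
    p: "Good p" and pmin: "\<And>q. Good q \<Longrightarrow> Polynomial.degree p \<le> Polynomial.degree q" by blast
  from p obtain v where v: "v \<in> W" "v \<noteq> (\<lambda>_. 0)" "papp p v = (\<lambda>_. 0)" and p0: "p \<noteq> 0"
    unfolding Good_def by blast
  have dp: "Polynomial.degree p \<noteq> 0"
  proof
    assume "Polynomial.degree p = 0"
    then obtain d where pd: "p = [:d:]" by (metis degree_eq_zeroE)
    with p0 have "d \<noteq> 0" by auto
    from v(3) have "(\<lambda>i. d * v i) = (\<lambda>_. 0)" unfolding pd papp_const .
    then have "v = (\<lambda>_. 0)" using \<open>d \<noteq> 0\<close> by (auto simp: fun_eq_iff)
    with v(2) show False by simp
  qed
  have quot: "\<exists>w\<in>W. w \<noteq> (\<lambda>_. 0) \<and> papp r w = (\<lambda>_. 0)"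
    if "p = r * q" "Polynomial.degree r \<ge> 1" for r q
  proof -
    have q0: "q \<noteq> 0" using p0 that by auto
    have r0: "r \<noteq> 0" using p0 that by auto
    have dq: "Polynomial.degree q < Polynomial.degree p"
      using that q0 r0 degree_mult_eq[of r q] by simp
    define w where "w = papp q v"
    have w: "w \<in> W" unfolding w_def by (rule papp_Inv[OF W v(1)])
    have "w \<noteq> (\<lambda>_. 0)"
    proof
      assume "w = (\<lambda>_. 0)"
      then have "Good q" unfolding Good_def w_def using q0 v by blast
      from pmin[OF this] dq show False by simp
    qed
    moreover have "papp r w = (\<lambda>_. 0)" using v(3) unfolding w_def that papp_mult .
    ultimately show ?thesis using w by blast
  qed
  define pc where "pc = map_poly complex_of_real p"
  have "\<not> constant (poly pc)" unfolding constant_degree pc_def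
    using dp by (simp add: of_real_hom.degree_map_poly_hom)
  from fundamental_theorem_of_algebra[OF this] obtain z where z: "poly pc z = 0" by blast
  show ?thesis
  proof (cases "Im z = 0")
    case True
    define r where "r = Re z"
    have "complex_of_real (poly p r) = 0"
      using z True unfolding pc_def r_def
      by (metis complex_is_Real_iff of_real_Re of_real_hom.poly_map_poly)
    then have "poly p r = 0" by simp
    then have "[:-r, 1:] dvd p" by (simp add: poly_eq_0_iff_dvd)
    then obtain q where "p = [:-r, 1:] * q" by (elim dvdE)
    from quot[OF this] obtain w where w: "w \<in> W" "w \<noteq> (\<lambda>_. 0)" "papp [:-r, 1:] w = (\<lambda>_. 0)"
      by auto
    from w(3) have "M w = (\<lambda>i. r * w i)" unfolding papp_lin by (auto simp: fun_eq_iff)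
    with w show ?thesis by blast
  next
    case False
    define x where "x = Re z"
    define y where "y = Im z"
    define r where "r = [: x^2 + y^2, -2 * x, 1 :]"
    have r0: "r \<noteq> 0" unfolding r_def by simp
    have dr: "Polynomial.degree r = 2" unfolding r_def by simp
    define q where "q = p div r"
    define s where "s = p mod r"
    have prs: "p = r * q + s" unfolding q_def s_def by (simp add: mult.commute)
    have rz: "poly (map_poly complex_of_real r) z = 0"
      unfolding r_def x_def y_def
      by (simp add: of_real_hom.map_poly_pCons_hom complex_eq_iff power2_eq_square algebra_simps)
    have sz: "poly (map_poly complex_of_real s) z = 0"
      using z unfolding pc_def prs poly_of_real_add poly_of_real_mult rz by simp
    have "s = 0"
    proof (rule ccontr)
      assume s0: "s \<noteq> 0"
      have "Polynomial.degree s < 2" using degree_mod_less'[OF r0] s0 dr unfolding s_def by auto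
      then have seq: "s = [:coeff s 0, coeff s 1:]"
        by (intro poly_eqI) (auto simp: coeff_pCons coeff_eq_0 split: nat.split)
      have "complex_of_real (coeff s 0) + complex_of_real (coeff s 1) * z = 0"
        using sz by (subst (asm) seq) (simp add: of_real_hom.map_poly_pCons_hom mult.commute)
      then have "coeff s 1 * Im z = 0" "coeff s 0 + coeff s 1 * Re z = 0"
        by (simp_all add: complex_eq_iff)
      then have "coeff s 1 = 0" "coeff s 0 = 0" using False by auto
      then have "s = 0" by (subst seq) simp
      with s0 show False by simp
    qed
    with prs have "p = r * q" by simp
    from quot[OF this] dr obtain w where w: "w \<in> W" "w \<noteq> (\<lambda>_. 0)" "papp r w = (\<lambda>_. 0)"
      by auto
    define m where "m = M w"
    have ws: "supp n w" using Wsupp w(1) by blast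
    have eq: "(x^2 + y^2) * w i + (-2 * x * m i + M m i) = 0" for i
      using w(3) unfolding r_def papp_quad m_def by (auto simp: fun_eq_iff)
    have "dot n w (\<lambda>i. (x^2 + y^2) * w i + (-2 * x * m i + M m i)) = 0"
      unfolding eq dot_def by simp
    moreover have "dot n w (\<lambda>i. (x^2 + y^2) * w i + (-2 * x * m i + M m i)) =
       (x^2 + y^2) * dot n w w + ((-2 * x) * dot n m w + dot n (M m) w)"
      by (subst dot_comm) (simp only: dot_add_left dot_scale_left)
    moreover have "dot n (M m) w = dot n m m" unfolding m_def by (simp add: dot_M)
    moreover have "dot n (\<lambda>i. m i - x * w i) (\<lambda>i. m i - x * w i) =
        dot n m m - 2 * x * dot n m w + x^2 * dot n w w"
      by (rule dot_sq_expand)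
    ultimately have "dot n (\<lambda>i. m i - x * w i) (\<lambda>i. m i - x * w i) + y^2 * dot n w w = 0"
      by (simp add: algebra_simps)
    moreover have "dot n w w > 0" using dot_self_pos[OF ws w(2)] .
    moreover have "y^2 > 0" using False unfolding y_def by simp
    moreover have "y^2 * dot n w w > 0" using calculation(3,2) by (rule mult_pos_pos)
    ultimately have False using dot_self_ge0[of n "\<lambda>i. m i - x * w i"] by linarith
    then show ?thesis ..
  qed
qed

definition EB where
  "EB V lam \<longleftrightarrow> (\<forall>j<n. supp n (V j) \<and> V j \<noteq> (\<lambda>_. 0) \<and> M (V j) = (\<lambda>i. lam j * V j i)) \<and>
     (\<forall>j<n. \<forall>l<n. j \<noteq> l \<longrightarrow> dot n (V j) (V l) = 0)"

lemma spec_k: "k \<le> n \<Longrightarrow> \<exists>V lam. (\<forall>j<k. supp n (V j) \<and> V j \<noteq> (\<lambda>_. 0) \<and> M (V j) = (\<lambda>i. lam j * V j i)) \<and>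
     (\<forall>j<k. \<forall>l<k. j \<noteq> l \<longrightarrow> dot n (V j) (V l) = 0)"
proof (induction k)
  case 0
  then show ?case by auto
next
  case (Suc k)
  then obtain V lam where V: "\<forall>j<k. supp n (V j) \<and> V j \<noteq> (\<lambda>_. 0) \<and> M (V j) = (\<lambda>i. lam j * V j i)"
    and O: "\<forall>j<k. \<forall>l<k. j \<noteq> l \<longrightarrow> dot n (V j) (V l) = 0" by auto
  define W where "W = {x. supp n x \<and> (\<forall>j<k. dot n x (V j) = 0)}"
  have "Inv W" unfolding Inv_def
  proof (intro conjI ballI allI)
    fix x assume "x \<in> W" then show "supp n x" unfolding W_def by auto
  next
    fix x y assume "x \<in> W" "y \<in> W" then show "(\<lambda>i. x i + y i) \<in> W"
      unfolding W_def by (auto simp: supp_add dot_add_left)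
  next
    fix c x assume "x \<in> W" then show "(\<lambda>i. c * x i) \<in> W"
      unfolding W_def by (auto simp: supp_scale dot_scale_left)
  next
    fix x assume x: "x \<in> W"
    have "dot n (M x) (V j) = 0" if "j < k" for j
    proof -
      have "dot n (M x) (V j) = dot n x (M (V j))" by (simp add: dot_M)
      also have "\<dots> = dot n x (\<lambda>i. lam j * V j i)" using V that by simp
      also have "\<dots> = lam j * dot n x (V j)" by (subst dot_comm) (simp add: dot_scale_left dot_comm)
      also have "\<dots> = 0" using x that unfolding W_def by simp
      finally show ?thesis .
    qed
    then show "M x \<in> W" unfolding W_def by (auto simp: M_supp)
  qed
  have "\<exists>c. (\<exists>i\<in>{..<n}. c i \<noteq> 0) \<and> (\<forall>j\<in>{..<k}. (\<Sum>i\<in>{..<n}. V j i * c i) = 0)"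
    by (rule homog) (use Suc.prems in auto)
  then obtain c where c: "\<exists>i\<in>{..<n}. c i \<noteq> 0" "\<forall>j\<in>{..<k}. (\<Sum>i\<in>{..<n}. V j i * c i) = 0" by blast
  define u where "u i = (if i < n then c i else 0)" for i
  have "u \<in> W" unfolding W_def
  proof (intro CollectI conjI allI impI)
    show "supp n u" unfolding supp_def u_def by auto
    fix j assume "j < k"
    have "dot n u (V j) = (\<Sum>i<n. V j i * c i)" unfolding dot_def u_def
      by (intro sum.cong) auto
    then show "dot n u (V j) = 0" using c(2) \<open>j < k\<close> by simp
  qed
  moreover have "u \<noteq> (\<lambda>_. 0)" using c(1) unfolding u_def by (auto simp: fun_eq_iff)
  ultimately obtain w r where w: "w \<in> W" "w \<noteq> (\<lambda>_. 0)" "M w = (\<lambda>i. r * w i)"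
    using eigvec_in_inv[OF \<open>Inv W\<close>] by blast
  define V' where "V' = V(k := w)"
  define lam' where "lam' = lam(k := r)"
  have "\<forall>j<Suc k. supp n (V' j) \<and> V' j \<noteq> (\<lambda>_. 0) \<and> M (V' j) = (\<lambda>i. lam' j * V' j i)"
    using V w unfolding V'_def lam'_def W_def by (auto simp: less_Suc_eq)
  moreover have "\<forall>j<Suc k. \<forall>l<Suc k. j \<noteq> l \<longrightarrow> dot n (V' j) (V' l) = 0"
  proof (intro allI impI)
    fix j l assume jl: "j < Suc k" "l < Suc k" "j \<noteq> l"
    have wV: "\<And>j. j < k \<Longrightarrow> dot n w (V j) = 0" using w(1) unfolding W_def by blast
    show "dot n (V' j) (V' l) = 0"
    proof (cases "j = k")
      case True
      then have "l < k" using jl by auto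
      then show ?thesis using wV True unfolding V'_def by simp
    next
      case False
      then have j: "j < k" using jl by auto
      show ?thesis
      proof (cases "l = k")
        case True
        then show ?thesis using wV[OF j] False unfolding V'_def by (simp add: dot_comm[of n "V j" w])
      next
        case False2: False
        then have "l < k" using jl by auto
        then show ?thesis using O j jl(3) False False2 unfolding V'_def by simp
      qed
    qed
  qed
  ultimately show ?case by blast
qed

lemma EB_exists: "\<exists>V lam. EB V lam"
  using spec_k[of n] unfolding EB_def by auto

lemma spanning:
  assumes EB: "EB V lam" and x: "supp n x"
  shows "x = (\<lambda>i. \<Sum>j<n. (dot n x (V j) / dot n (V j) (V j)) * V j i)"
proof -
  have V: "\<And>j. j < n \<Longrightarrow> supp n (V j) \<and> V j \<noteq> (\<lambda>_. 0)"
    and O: "\<And>j l. j < n \<Longrightarrow> l < n \<Longrightarrow> j \<noteq> l \<Longrightarrow> dot n (V j) (V l) = 0"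
    using EB unfolding EB_def by auto
  define y where "y = (\<lambda>i. \<Sum>j<n. (dot n x (V j) / dot n (V j) (V j)) * V j i)"
  define r where "r = (\<lambda>i. x i + (-1) * y i)"
  have ys: "supp n y" unfolding y_def by (rule supp_sum) (intro supp_scale, use V in auto)
  have rs: "supp n r" unfolding r_def by (intro supp_add supp_scale x ys)
  have ry: "dot n y (V l) = dot n x (V l)" if l: "l < n" for l
  proof -
    have "dot n y (V l) = (\<Sum>j<n. (dot n x (V j) / dot n (V j) (V j)) * dot n (V j) (V l))"
      unfolding y_def by (simp add: dot_sum_left dot_scale_div)
    also have "\<dots> = (dot n x (V l) / dot n (V l) (V l)) * dot n (V l) (V l)"
      using l O by (subst sum.remove[of _ l]) (auto intro!: sum.neutral)
    also have "\<dots> = dot n x (V l)" using dot_self_pos[of n "V l"] V[OF l] by simp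
    finally show ?thesis .
  qed
  have r0: "r = (\<lambda>_. 0)"
  proof (rule ccontr)
    assume rn: "r \<noteq> (\<lambda>_. 0)"
    have rV: "dot n r (V l) = 0" if "l < n" for l
      unfolding r_def using ry[OF that] by (simp only: dot_add_left dot_scale_left)
    define w where "w j = (if j < n then V j else r)" for j
    have "\<exists>c. (\<exists>j\<in>{..n}. c j \<noteq> 0) \<and> (\<forall>i\<in>{..<n}. (\<Sum>j\<in>{..n}. w j i * c j) = 0)"
      by (rule homog) auto
    then obtain c where c: "\<exists>j\<in>{..n}. c j \<noteq> 0" "\<forall>i\<in>{..<n}. (\<Sum>j\<in>{..n}. w j i * c j) = 0" by blast
    have "c l = 0" if "l \<in> {..n}" for l
    proof (rule orth_indep[of "{..n}" n w c l])
      show "supp n (w j) \<and> w j \<noteq> (\<lambda>_. 0)" if "j \<in> {..n}" for j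
        using V rs rn unfolding w_def by auto
      show "dot n (w j) (w l) = 0" if jl: "j \<in> {..n}" "l \<in> {..n}" "j \<noteq> l" for j l
      proof -
        consider "j < n" "l < n" | "j < n" "l = n" | "j = n" "l < n" | "j = n" "l = n"
          using jl by fastforce
        then show ?thesis
        proof cases
          case 1 then show ?thesis using O jl unfolding w_def by simp
        next
          case 2 then show ?thesis using rV[of j] unfolding w_def by (simp add: dot_comm[of n "V j" r])
        next
          case 3 then show ?thesis using rV[of l] unfolding w_def by simp
        next
          case 4 then show ?thesis using jl by simp
        qed
      qed
      show "(\<Sum>j\<in>{..n}. c j * w j i) = 0" if "i < n" for i
        using c(2) that by (simp add: mult.commute)
    qed (use that in auto)
    with c(1) show False by blast
  qed
  show ?thesis
  proof
    fix i
    have "r i = 0" using r0 by simp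
    then show "x i = (\<Sum>j<n. dot n x (V j) / dot n (V j) (V j) * V j i)"
      unfolding r_def y_def by simp
  qed
qed

lemma rayleigh:
  assumes EB: "EB V lam" and x: "supp n x"
  shows "dot n x (M x) = (\<Sum>j<n. lam j * (dot n x (V j))^2 / dot n (V j) (V j))"
    and "dot n x x = (\<Sum>j<n. (dot n x (V j))^2 / dot n (V j) (V j))"
proof -
  define co where "co j = dot n x (V j) / dot n (V j) (V j)" for j
  have xe: "x = (\<lambda>i. \<Sum>j<n. co j * V j i)" unfolding co_def by (rule spanning[OF EB x])
  have eig: "\<And>j. j < n \<Longrightarrow> M (V j) = (\<lambda>i. lam j * V j i)" using EB unfolding EB_def by auto
  have "M x = (\<lambda>i. \<Sum>j<n. M (\<lambda>k. co j * V j k) i)"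
    by (subst xe) (rule M_sum)
  also have "\<dots> = (\<lambda>i. \<Sum>j<n. co j * (lam j * V j i))"
    by (intro ext sum.cong refl) (simp add: M_scale eig)
  finally have Mx: "M x = (\<lambda>i. \<Sum>j<n. (co j * lam j) * V j i)" by (simp add: mult.assoc)
  have "dot n x (M x) = dot n (M x) x" by (rule dot_comm)
  also have "\<dots> = (\<Sum>j<n. (co j * lam j) * dot n (V j) x)"
    unfolding Mx by (simp add: dot_sum_left dot_scale_left)
  also have "\<dots> = (\<Sum>j<n. lam j * (dot n x (V j))^2 / dot n (V j) (V j))"
    unfolding co_def by (intro sum.cong refl) (simp add: dot_comm power2_eq_square)
  finally show "dot n x (M x) = (\<Sum>j<n. lam j * (dot n x (V j))^2 / dot n (V j) (V j))" .
  have "dot n x x = dot n (\<lambda>i. \<Sum>j<n. co j * V j i) x" by (subst (2) xe) (rule dot_comm)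
  also have "\<dots> = (\<Sum>j<n. co j * dot n (V j) x)"
    by (simp add: dot_sum_left dot_scale_left)
  also have "\<dots> = (\<Sum>j<n. (dot n x (V j))^2 / dot n (V j) (V j))"
    unfolding co_def by (intro sum.cong refl) (simp add: dot_comm power2_eq_square)
  finally show "dot n x x = (\<Sum>j<n. (dot n x (V j))^2 / dot n (V j) (V j))" .
qed

end



lemma spectral_charpoly:
  fixes A :: "real mat"
  assumes A: "A \<in> carrier_mat n n" and S: "\<And>i j. i < n \<Longrightarrow> j < n \<Longrightarrow> A $$ (i,j) = A $$ (j,i)"
  defines "a \<equiv> \<lambda>i j. if i < n \<and> j < n then A $$ (i,j) else 0"
  shows "symm n a \<and> (\<exists>V lam. symm.EB n a V lam \<and> char_poly A = (\<Prod>x\<leftarrow>map lam [0..<n]. [:-x, 1:]))"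
proof -
  interpret symm n a
    by unfold_locales (auto simp: a_def S)
  obtain V lam where EB: "EB V lam" using EB_exists by blast
  have V: "\<And>j. j < n \<Longrightarrow> supp n (V j) \<and> V j \<noteq> (\<lambda>_. 0) \<and> M (V j) = (\<lambda>i. lam j * V j i)"
    and O: "\<And>j l. j < n \<Longrightarrow> l < n \<Longrightarrow> j \<noteq> l \<Longrightarrow> dot n (V j) (V l) = 0"
    using EB unfolding EB_def by auto
  define P where "P = mat n n (\<lambda>(i,j). V j i)"
  define D where "D = mat n n (\<lambda>(i,j). if i = j then lam i else (0::real))"
  define Q where "Q = mat n n (\<lambda>(i,j). V i j / dot n (V i) (V i))"
  have P: "P \<in> carrier_mat n n" and D: "D \<in> carrier_mat n n" and Q: "Q \<in> carrier_mat n n"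
    unfolding P_def D_def Q_def by auto
  have QP: "Q * P = 1\<^sub>m n"
  proof (rule eq_matI)
    fix i j assume ij: "i < dim_row (1\<^sub>m n)" "j < dim_col (1\<^sub>m n)"
    then have i: "i < n" and j: "j < n" by auto
    have "(Q * P) $$ (i,j) = (\<Sum>k<n. V i k / dot n (V i) (V i) * V j k)"
      using i j unfolding P_def Q_def
      by (simp add: scalar_prod_def atLeast0LessThan)
    also have "\<dots> = dot n (V i) (V j) / dot n (V i) (V i)"
      unfolding dot_def by (simp add: sum_divide_distrib algebra_simps)
    also have "\<dots> = 1\<^sub>m n $$ (i,j)"
      using O[OF i j] dot_self_pos[of n "V i"] V[OF i] i j by auto
    finally show "(Q * P) $$ (i,j) = 1\<^sub>m n $$ (i,j)" .
  qed (use P Q in auto)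
  have PQ: "P * Q = 1\<^sub>m n" by (rule mat_mult_left_right_inverse[OF Q P QP])
  have AP: "A * P = P * D"
  proof (rule eq_matI)
    fix i j assume ij: "i < dim_row (P * D)" "j < dim_col (P * D)"
    then have i: "i < n" and j: "j < n" using P D by auto
    have "(A * P) $$ (i,j) = (\<Sum>k<n. A $$ (i,k) * V j k)"
      using i j A unfolding P_def by (simp add: scalar_prod_def atLeast0LessThan)
    also have "\<dots> = M (V j) i" unfolding mv_def a_def using i by simp
    also have "\<dots> = lam j * V j i" using V[OF j] by simp
    also have "\<dots> = (P * D) $$ (i,j)"
    proof -
      have "(P * D) $$ (i,j) = (\<Sum>k<n. V k i * (if k = j then lam k else 0))"
        using i j unfolding P_def D_def by (simp add: scalar_prod_def atLeast0LessThan)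
      also have "\<dots> = V j i * lam j" using j
        by (simp add: if_distrib[of "\<lambda>x. _ * x"] cong: if_cong)
      finally show ?thesis by simp
    qed
    finally show "(A * P) $$ (i,j) = (P * D) $$ (i,j)" .
  qed (use A P D in auto)
  have "A = A * (P * Q)" using A by (simp add: PQ)
  also have "\<dots> = (A * P) * Q" using A P Q by (simp add: assoc_mult_mat)
  also have "\<dots> = P * D * Q" unfolding AP ..
  finally have APDQ: "A = P * D * Q" .
  have "similar_mat_wit A D P Q"
    unfolding similar_mat_wit_def Let_def using A P D Q PQ QP APDQ by auto
  then have "similar_mat A D" unfolding similar_mat_def by blast
  then have "char_poly A = char_poly D" by (rule char_poly_similar)
  also have "\<dots> = (\<Prod>x\<leftarrow>diag_mat D. [:-x, 1:])"
    by (rule char_poly_upper_triangular[OF D]) (auto simp: upper_triangular_def D_def)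
  also have "diag_mat D = map lam [0..<n]"
    unfolding diag_mat_def D_def by auto
  finally show ?thesis using EB symm_axioms by blast
qed

lemma proots_lin_prod: "proots (\<Prod>x\<leftarrow>L. [:-x, 1::real:]) = mset L"
proof (induction L)
  case Nil then show ?case by simp
next
  case (Cons x L)
  have "(\<Prod>y\<leftarrow>L. [:-y, 1::real:]) \<noteq> 0" by (auto simp: prod_list_zero_iff)
  then have "proots ([:-x, 1:] * (\<Prod>y\<leftarrow>L. [:-y, 1::real:])) = proots [:-x, 1:] + proots (\<Prod>y\<leftarrow>L. [:-y, 1::real:])"
    by (intro proots_mult) auto
  then show ?case using Cons by (simp del: mult_pCons_left)
qed



definition RH :: "nat \<Rightarrow> (nat \<Rightarrow> nat \<Rightarrow> bool) \<Rightarrow> (nat \<Rightarrow> real) \<Rightarrow> real" where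
  "RH n H x = (\<Sum>i<n. \<Sum>j<n. if H i j then (x i + x j)^2 else 0) / 2"

lemma RH_nonneg: "RH n H x \<ge> 0"
  unfolding RH_def by (intro divide_nonneg_pos sum_nonneg) auto

lemma RH_zero: assumes "RH n H x = 0" "i < n" "j < n" "H i j" shows "x i + x j = 0"
proof -
  have "(\<Sum>i<n. \<Sum>j<n. if H i j then (x i + x j)^2 else 0) = 0" using assms(1) unfolding RH_def by simp
  then have "\<forall>i\<in>{..<n}. (\<Sum>j<n. if H i j then (x i + x j)^2 else 0) = 0"
    by (subst (asm) sum_nonneg_eq_0_iff) (auto intro!: sum_nonneg)
  then have "(\<Sum>j<n. if H i j then (x i + x j)^2 else 0) = 0" using assms by auto
  then have "\<forall>j\<in>{..<n}. (if H i j then (x i + x j)^2 else 0) = 0"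
    by (subst (asm) sum_nonneg_eq_0_iff) auto
  then have "(if H i j then (x i + x j)^2 else 0) = 0" using assms(3) by blast
  then have "(x i + x j)^2 = 0" using assms(4) by simp
  then show ?thesis by simp
qed

lemma RH_EP: assumes "\<And>i j. i < n \<Longrightarrow> j < n \<Longrightarrow> H i j \<Longrightarrow> x i + x j = 0" shows "RH n H x = 0"
  unfolding RH_def using assms by (auto intro!: sum.neutral)

locale gr =
  fixes n :: nat and E :: "nat \<Rightarrow> nat \<Rightarrow> bool"
  assumes sg: "simple_graph n E"
begin

abbreviation H where "H \<equiv> complement n E"

lemma H_sym: "H i j = H j i"
  using sg unfolding complement_def simple_graph_def by auto

lemma H_lt: "H i j \<Longrightarrow> i < n \<and> j < n \<and> i \<noteq> j"
  unfolding complement_def by auto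

lemma E_iff: "i < n \<Longrightarrow> j < n \<Longrightarrow> (if E i j then 1 else 0 :: real) = 1 - (if H i j then 1 else 0) - (if i = j then 1 else 0)"
  using sg unfolding complement_def simple_graph_def by auto

definition comp :: "nat \<Rightarrow> nat set" where "comp v = {u. H\<^sup>*\<^sup>* v u}"

lemma rt_sym: "H\<^sup>*\<^sup>* u v \<Longrightarrow> H\<^sup>*\<^sup>* v u"
proof (induction rule: rtranclp_induct)
  case base then show ?case by simp
next
  case (step y z)
  then show ?case using H_sym by (metis converse_rtranclp_into_rtranclp)
qed

lemma rt_lt: "H\<^sup>*\<^sup>* v u \<Longrightarrow> v < n \<Longrightarrow> u < n"
  by (induction rule: rtranclp_induct) (auto dest: H_lt)

lemma comp_self: "v \<in> comp v" unfolding comp_def by simp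

lemma comp_sub: "v < n \<Longrightarrow> comp v \<subseteq> {..<n}"
  unfolding comp_def using rt_lt by auto

lemma comp_eq: "u \<in> comp v \<Longrightarrow> comp u = comp v"
  unfolding comp_def using rt_sym by (auto intro: rtranclp_trans)

lemma comp_edge: "H i j \<Longrightarrow> j \<in> comp i"
  unfolding comp_def by auto

lemma comps_def': "components n H = comp ` {..<n}"
  unfolding components_def comp_def by auto

lemma comps_finite: "finite (components n H)"
  unfolding comps_def' by simp

lemma comp_in: "v < n \<Longrightarrow> comp v \<in> components n H"
  unfolding comps_def' by simp

lemma compsE: assumes "C \<in> components n H" obtains v where "v < n" "C = comp v"
  using assms unfolding comps_def' by auto

lemma comps_sub: assumes "C \<in> components n H" shows "C \<subseteq> {..<n}"
proof -
  obtain v where "v < n" "C = comp v" using assms by (rule compsE)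
  then show ?thesis using comp_sub by simp
qed

lemma comps_ne: assumes "C \<in> components n H" shows "C \<noteq> {}"
proof -
  obtain v where "v < n" "C = comp v" using assms by (rule compsE)
  then show ?thesis using comp_self by auto
qed

lemma comps_mem: assumes "C \<in> components n H" "u \<in> C" shows "C = comp u"
proof -
  obtain v where "v < n" "C = comp v" using assms(1) by (rule compsE)
  then show ?thesis using comp_eq[of u v] assms(2) by simp
qed

lemma comps_disj: "C \<in> components n H \<Longrightarrow> D \<in> components n H \<Longrightarrow> u \<in> C \<Longrightarrow> u \<in> D \<Longrightarrow> C = D"
  using comps_mem[of C u] comps_mem[of D u] by simp

lemma comps_fin: "C \<in> components n H \<Longrightarrow> finite C"
  using comps_sub finite_subset by blast

definition bp :: "nat set \<Rightarrow> nat set \<times> nat set" where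
  "bp C = (SOME p. bipartition H C (fst p) (snd p) \<and> (balanced_comp H C \<longrightarrow> card (fst p) = card (snd p)))"

definition BX where "BX C = fst (bp C)"
definition BY where "BY C = snd (bp C)"

lemma bp: assumes "bipartite_comp H C"
  shows "bipartition H C (BX C) (BY C) \<and> (balanced_comp H C \<longrightarrow> card (BX C) = card (BY C))"
proof -
  have "\<exists>p. bipartition H C (fst p) (snd p) \<and> (balanced_comp H C \<longrightarrow> card (fst p) = card (snd p))"
  proof (cases "balanced_comp H C")
    case True then show ?thesis unfolding balanced_comp_def by auto
  next
    case False then show ?thesis using assms unfolding bipartite_comp_def by auto
  qed
  from someI_ex[OF this] show ?thesis unfolding BX_def BY_def bp_def .
qed

lemma bp_parts: assumes "bipartite_comp H C"
  shows "BX C \<union> BY C = C" "BX C \<inter> BY C = {}"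
    "\<And>x y. x \<in> BX C \<Longrightarrow> y \<in> BX C \<Longrightarrow> \<not> H x y"
    "\<And>x y. x \<in> BY C \<Longrightarrow> y \<in> BY C \<Longrightarrow> \<not> H x y"
  using bp[OF assms] unfolding bipartition_def by auto

lemma bal_card: "bipartite_comp H C \<Longrightarrow> balanced_comp H C \<Longrightarrow> card (BX C) = card (BY C)"
  using bp by blast

lemma bal_bip: "balanced_comp H C \<Longrightarrow> bipartite_comp H C"
  unfolding balanced_comp_def bipartite_comp_def by blast

lemma unbal_card: assumes "bipartite_comp H C" "\<not> balanced_comp H C"
  shows "card (BX C) \<noteq> card (BY C)"
  using bp[OF assms(1)] assms(2) unfolding balanced_comp_def by blast

lemma bp_edge: assumes C: "C \<in> components n H" "bipartite_comp H C" and i: "i \<in> C" and e: "H i j"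
  shows "(i \<in> BX C \<and> j \<in> BY C) \<or> (i \<in> BY C \<and> j \<in> BX C)"
proof -
  have j: "j \<in> C" using comps_mem[OF C(1) i] comp_edge[OF e] by simp
  show ?thesis using bp_parts[OF C(2)] i j e by blast
qed

definition z :: "nat set \<Rightarrow> nat \<Rightarrow> real" where
  "z C = (\<lambda>i. if i \<in> BX C then 1 else if i \<in> BY C then -1 else 0)"

lemma z_supp: assumes "C \<in> components n H" "bipartite_comp H C" shows "supp n (z C)"
  unfolding supp_def
proof (intro allI impI)
  fix i assume "n \<le> i"
  then have "i \<notin> C" using comps_sub[OF assms(1)] by auto
  then have "i \<notin> BX C" "i \<notin> BY C" using bp_parts(1)[OF assms(2)] by auto
  then show "z C i = 0" unfolding z_def by simp
qed

lemma z_out: "C \<in> components n H \<Longrightarrow> bipartite_comp H C \<Longrightarrow> u \<notin> C \<Longrightarrow> z C u = 0"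
  unfolding z_def using bp_parts by auto

definition EP :: "(nat \<Rightarrow> real) \<Rightarrow> bool" where "EP x \<longleftrightarrow> (\<forall>i j. H i j \<longrightarrow> x i + x j = 0)"

lemma EP_bip: assumes x: "EP x" and C: "C \<in> components n H" "bipartite_comp H C" and v: "v \<in> C"
  shows "\<forall>u\<in>C. x u = (if (u \<in> BX C) = (v \<in> BX C) then x v else - x v)"
proof -
  have Cv: "C = comp v" using comps_mem[OF C(1) v] .
  have "H\<^sup>*\<^sup>* v u \<Longrightarrow> x u = (if (u \<in> BX C) = (v \<in> BX C) then x v else - x v)" for u
  proof (induction rule: rtranclp_induct)
    case base then show ?case by simp
  next
    case (step u w)
    have u: "u \<in> C" using step.hyps(1) Cv unfolding comp_def by simp
    have "x u + x w = 0" using x step.hyps(2) unfolding EP_def by blast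
    then have "x w = - x u" by linarith
    moreover have "(w \<in> BX C) = (u \<notin> BX C)"
      using bp_edge[OF C u step.hyps(2)] bp_parts(2)[OF C(2)] by blast
    ultimately show ?case using step.IH by auto
  qed
  then show ?thesis using Cv unfolding comp_def by auto
qed

lemma EP_nonbip: assumes x: "EP x" and v: "v < n" and nb: "\<not> bipartite_comp H (comp v)"
  shows "x v = 0"
proof (rule ccontr)
  assume xv: "x v \<noteq> 0"
  have pm: "H\<^sup>*\<^sup>* v u \<Longrightarrow> x u = x v \<or> x u = - x v" for u
  proof (induction rule: rtranclp_induct)
    case base then show ?case by simp
  next
    case (step u w)
    have "x u + x w = 0" using x step.hyps(2) unfolding EP_def by blast
    then have "x w = - x u" by linarith
    then show ?case using step.IH by auto
  qed
  define X where "X = {u \<in> comp v. x u = x v}"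
  define Y where "Y = {u \<in> comp v. x u = - x v}"
  have "bipartition H (comp v) X Y"
    unfolding bipartition_def
  proof (intro conjI ballI)
    show "X \<union> Y = comp v" unfolding X_def Y_def using pm unfolding comp_def by auto
    show "X \<inter> Y = {}" unfolding X_def Y_def using xv by auto
  next
    fix p q assume "p \<in> X" "q \<in> X"
    then show "\<not> H p q" using x xv unfolding EP_def X_def by force
  next
    fix p q assume "p \<in> Y" "q \<in> Y"
    then show "\<not> H p q" using x xv unfolding EP_def Y_def by force
  qed
  then show False using nb unfolding bipartite_comp_def by blast
qed

lemma sum_z: assumes C: "C \<in> components n H" "bipartite_comp H C"
  shows "dot n x (z C) = (\<Sum>u\<in>BX C. x u) - (\<Sum>u\<in>BY C. x u)"
proof -
  have sub: "BX C \<subseteq> {..<n}" "BY C \<subseteq> {..<n}" using bp_parts(1)[OF C(2)] comps_sub[OF C(1)] by auto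
  have "dot n x (z C) = (\<Sum>u<n. (if u \<in> BX C then x u else 0) - (if u \<in> BY C then x u else 0))"
    unfolding dot_def z_def using bp_parts(2)[OF C(2)] by (intro sum.cong) auto
  also have "\<dots> = (\<Sum>u\<in>{..<n} \<inter> BX C. x u) - (\<Sum>u\<in>{..<n} \<inter> BY C. x u)"
    by (simp add: sum_subtractf sum.inter_restrict)
  also have "\<dots> = (\<Sum>u\<in>BX C. x u) - (\<Sum>u\<in>BY C. x u)"
    using sub by (simp add: Int_absorb1)
  finally show ?thesis .
qed

end



lemma desc_count:
  fixes R :: "real list" and c :: real and P :: "real \<Rightarrow> real \<Rightarrow> bool"
  assumes that: "\<And>x y. x \<le> y \<Longrightarrow> P c x \<Longrightarrow> P c y"
    and mono: "\<And>i j. i \<le> j \<Longrightarrow> j < length R \<Longrightarrow> R ! j \<le> R ! i"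
    and k: "k < length R"
  shows "(P c (R ! k)) \<longleftrightarrow> k < card {i. i < length R \<and> P c (R ! i)}"
proof
  assume "P c (R ! k)"
  then have "{..k} \<subseteq> {i. i < length R \<and> P c (R ! i)}"
    using mono k that by auto
  from card_mono[OF _ this] show "k < card {i. i < length R \<and> P c (R ! i)}" by simp
next
  assume "k < card {i. i < length R \<and> P c (R ! i)}"
  show "P c (R ! k)"
  proof (rule ccontr)
    assume nP: "\<not> P c (R ! k)"
    have "{i. i < length R \<and> P c (R ! i)} \<subseteq> {..<k}"
    proof
      fix i assume i: "i \<in> {i. i < length R \<and> P c (R ! i)}"
      show "i \<in> {..<k}"
      proof (rule ccontr)
        assume "i \<notin> {..<k}"
        then have "R ! i \<le> R ! k" using mono i by auto
        then have "P c (R ! k)" using that i by blast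
        with nP show False ..
      qed
    qed
    from card_mono[OF _ this] \<open>k < card _\<close> show False by simp
  qed
qed

lemma sorted_rev_nth:
  fixes L :: "real list"
  assumes k: "k < length L"
  shows "rev (sort L) ! k = c \<longleftrightarrow>
    card {i. i < length L \<and> L ! i > c} \<le> k \<and> k < card {i. i < length L \<and> L ! i \<ge> c}"
proof -
  define R where "R = rev (sort L)"
  have lR: "length R = length L" unfolding R_def by simp
  have mono: "R ! j \<le> R ! i" if "i \<le> j" "j < length R" for i j
  proof -
    have s: "sorted (sort L)" by simp
    have "R ! j = sort L ! (length L - Suc j)" "R ! i = sort L ! (length L - Suc i)"
      using that lR unfolding R_def by (auto simp: rev_nth)
    moreover have "sort L ! (length L - Suc j) \<le> sort L ! (length L - Suc i)"
      using that lR by (intro sorted_nth_mono[OF s]) (auto simp: R_def)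
    ultimately show ?thesis by simp
  qed
  have cnt: "card {i. i < length R \<and> Q (R ! i)} = card {i. i < length L \<and> Q (L ! i)}" for Q
  proof -
    have "card {i. i < length R \<and> Q (R ! i)} = length (filter Q R)"
      by (simp add: length_filter_conv_card)
    also have "\<dots> = size (filter_mset Q (mset R))" by (metis mset_filter size_mset)
    also have "mset R = mset L" unfolding R_def by simp
    also have "size (filter_mset Q (mset L)) = length (filter Q L)" by (metis mset_filter size_mset)
    also have "\<dots> = card {i. i < length L \<and> Q (L ! i)}" by (simp add: length_filter_conv_card)
    finally show ?thesis .
  qed
  have kR: "k < length R" using k lR by simp
  have gt: "R ! k > c \<longleftrightarrow> k < card {i. i < length R \<and> R ! i > c}"
    using desc_count[of "\<lambda>c x. x > c", OF _ mono kR] by fastforce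
  have ge: "R ! k \<ge> c \<longleftrightarrow> k < card {i. i < length R \<and> R ! i \<ge> c}"
    using desc_count[of "\<lambda>c x. x \<ge> c", OF _ mono kR] by fastforce
  have "R ! k = c \<longleftrightarrow> R ! k \<ge> c \<and> \<not> R ! k > c" by auto
  then show ?thesis unfolding R_def[symmetric] using gt ge cnt[of "\<lambda>x. x > c"] cnt[of "\<lambda>x. x \<ge> c"]
    by (simp add: not_less conj_commute)
qed



context gr begin

definition a :: "nat \<Rightarrow> nat \<Rightarrow> real" where
  "a = (\<lambda>i j. if i < n \<and> j < n then signless_laplacian n E $$ (i,j) else 0)"

definition ee :: "nat \<Rightarrow> nat \<Rightarrow> real" where "ee i j = (if E i j then 1 else 0)"
definition hh :: "nat \<Rightarrow> nat \<Rightarrow> real" where "hh i j = (if H i j then 1 else 0)"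

lemma a_val: "i < n \<Longrightarrow> j < n \<Longrightarrow>
   a i j = ee i j + (if i = j then (\<Sum>k<n. ee i k) else 0)"
proof -
  assume i: "i < n" and j: "j < n"
  have "real (degree n E i) = (\<Sum>k<n. ee i k)"
  proof -
    have "(\<Sum>k<n. ee i k) = (\<Sum>k\<in>{k\<in>{..<n}. E i k}. 1)"
      unfolding ee_def by (rule sum.inter_filter[symmetric]) simp
    also have "\<dots> = real (card {k\<in>{..<n}. E i k})" by simp
    finally show ?thesis unfolding degree_def by (simp add: atLeast0LessThan)
  qed
  then show ?thesis using i j unfolding a_def signless_laplacian_def ee_def
    by (cases "i = j") simp_all
qed

lemma ee_iff: "i < n \<Longrightarrow> j < n \<Longrightarrow> ee i j = 1 - hh i j - (if i = j then 1 else 0)"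
  unfolding ee_def hh_def using E_iff by simp

lemma RH_alt: "RH n H x = (\<Sum>i<n. \<Sum>j<n. (if H i j then 1 else 0) * (x i * x j + x i * x i))"
proof -
  define h where "h i j = (if H i j then 1 else 0 :: real)" for i j
  have hs: "h i j = h j i" for i j unfolding h_def using H_sym by simp
  have "2 * RH n H x = (\<Sum>i<n. \<Sum>j<n. h i j * (x i * x i) + 2 * (h i j * (x i * x j)) + h i j * (x j * x j))"
    unfolding RH_def h_def by (auto intro!: sum.cong simp: power2_eq_square algebra_simps)
  also have "\<dots> = (\<Sum>i<n. \<Sum>j<n. h i j * (x i * x i)) + 2 * (\<Sum>i<n. \<Sum>j<n. h i j * (x i * x j))
      + (\<Sum>i<n. \<Sum>j<n. h i j * (x j * x j))"
    by (simp add: sum.distrib sum_distrib_left)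
  also have "(\<Sum>i<n. \<Sum>j<n. h i j * (x j * x j)) = (\<Sum>i<n. \<Sum>j<n. h i j * (x i * x i))"
    by (subst sum.swap) (simp add: hs)
  finally have "2 * RH n H x = 2 * (\<Sum>i<n. \<Sum>j<n. h i j * (x i * x j + x i * x i))"
    by (simp add: sum.distrib sum_distrib_left algebra_simps)
  then show ?thesis unfolding h_def by simp
qed

lemma F_identity:
  "dot n x (mv a n x) - (real n - 2) * dot n x x = (\<Sum>i<n. x i)^2 - RH n H x"
proof -
  have S1: "x i * (\<Sum>j<n. a i j * x j) = (\<Sum>j<n. ee i j * (x i * x j + x i * x i))" if i: "i < n" for i
  proof -
    have "x i * (\<Sum>j<n. a i j * x j) = (\<Sum>j<n. ee i j * (x i * x j)) + (\<Sum>j<n. (if i = j then (\<Sum>k<n. ee i k) else 0) * (x i * x j))"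
      using i by (simp add: a_val sum_distrib_left algebra_simps sum.distrib)
    also have "(\<Sum>j<n. (if i = j then (\<Sum>k<n. ee i k) else 0) * (x i * x j)) = (\<Sum>k<n. ee i k) * (x i * x i)"
      using i by (simp add: if_distrib[of "\<lambda>y. y * _"] cong: if_cong)
    finally show ?thesis
      by (simp add: sum_distrib_left sum.distrib algebra_simps)
  qed
  have S2: "(\<Sum>j<n. ee i j * (x i * x j + x i * x i)) =
     x i * (\<Sum>j<n. x j) + real n * (x i * x i) - (\<Sum>j<n. hh i j * (x i * x j + x i * x i)) - 2 * (x i * x i)"
    if i: "i < n" for i
  proof -
    have "(\<Sum>j<n. ee i j * (x i * x j + x i * x i)) =
       (\<Sum>j<n. (x i * x j + x i * x i) - hh i j * (x i * x j + x i * x i) - (if i = j then 1 else 0) * (x i * x j + x i * x i))"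
      using i by (intro sum.cong refl) (simp add: ee_iff algebra_simps)
    also have "\<dots> = (\<Sum>j<n. x i * x j + x i * x i) - (\<Sum>j<n. hh i j * (x i * x j + x i * x i))
        - (\<Sum>j<n. (if i = j then 1 else 0) * (x i * x j + x i * x i))"
      by (simp add: sum_subtractf)
    also have "(\<Sum>j<n. (if i = j then 1 else 0) * (x i * x j + x i * x i)) = 2 * (x i * x i)"
      using i by (simp add: if_distrib[of "\<lambda>y. y * _"] cong: if_cong)
    also have "(\<Sum>j<n. x i * x j + x i * x i) = x i * (\<Sum>j<n. x j) + real n * (x i * x i)"
      by (simp add: sum.distrib sum_distrib_left)
    finally show ?thesis .
  qed
  have "dot n x (mv a n x) = (\<Sum>i<n. x i * (\<Sum>j<n. x j) + real n * (x i * x i)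
      - (\<Sum>j<n. hh i j * (x i * x j + x i * x i)) - 2 * (x i * x i))"
    unfolding dot_def mv_def by (intro sum.cong refl) (simp add: S1 S2)
  also have "\<dots> = (\<Sum>i<n. x i) * (\<Sum>j<n. x j) + real n * dot n x x - RH n H x - 2 * dot n x x"
    unfolding RH_alt dot_def hh_def
    by (simp add: sum_subtractf sum.distrib sum_distrib_left sum_distrib_right) (simp add: mult.commute)
  finally show ?thesis by (simp add: power2_eq_square algebra_simps)
qed

lemma ee_sym: "ee i j = ee j i"
  using sg unfolding ee_def simple_graph_def by auto

lemma symm_a: "symm n a"
proof
  fix i j
  show "a i j = a j i"
  proof (cases "i < n \<and> j < n")
    case True
    then show ?thesis using a_val[of i j] a_val[of j i] ee_sym[of i j] by auto
  next
    case False
    then show ?thesis unfolding a_def by auto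
  qed
next
  fix i j :: nat assume "n \<le> i" then show "a i j = 0" unfolding a_def by simp
qed

end

sublocale gr \<subseteq> symm n a by (rule symm_a)

context gr begin

definition F where "F x = dot n x (M x) - (real n - 2) * dot n x x"

lemma F_sum: assumes EB: "EB V lam" and x: "supp n x"
  shows "F x = (\<Sum>j<n. (lam j - (real n - 2)) * (dot n x (V j))^2 / dot n (V j) (V j))"
proof -
  have "F x = (\<Sum>j<n. lam j * (dot n x (V j))^2 / dot n (V j) (V j))
      - (real n - 2) * (\<Sum>j<n. (dot n x (V j))^2 / dot n (V j) (V j))"
    unfolding F_def rayleigh[OF EB x] ..
  also have "\<dots> = (\<Sum>j<n. (lam j - (real n - 2)) * (dot n x (V j))^2 / dot n (V j) (V j))"
    by (simp add: sum_distrib_left sum_subtractf[symmetric] diff_divide_distrib left_diff_distrib)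
  finally show ?thesis .
qed

lemma F_graph: "F x = (dot n x (\<lambda>i. if i < n then 1 else 0))^2 - RH n H x"
proof -
  have "dot n x (\<lambda>i. if i < n then 1 else 0) = (\<Sum>i<n. x i)" unfolding dot_def by simp
  then show ?thesis unfolding F_def using F_identity by simp
qed

lemma LB:
  assumes EB: "EB V lam" and J: "finite J"
    and w: "\<And>j. j \<in> J \<Longrightarrow> supp n (w j)"
    and indep: "\<And>c. (\<forall>i<n. (\<Sum>j\<in>J. c j * w j i) = 0) \<Longrightarrow> (\<forall>j\<in>J. c j = 0)"
    and Fnn: "\<And>c. F (\<lambda>i. \<Sum>j\<in>J. c j * w j i) \<ge> 0"
  shows "card J \<le> card {j. j < n \<and> lam j \<ge> real n - 2}"
proof (rule ccontr)
  define S where "S = {j. j < n \<and> lam j \<ge> real n - 2}"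
  assume "\<not> card J \<le> card {j. j < n \<and> lam j \<ge> real n - 2}"
  then have lt: "card S < card J" unfolding S_def by simp
  have fS: "finite S" unfolding S_def by simp
  from homog[OF fS J lt, of "\<lambda>k j. dot n (w j) (V k)"] obtain c where
    c: "\<exists>j\<in>J. c j \<noteq> 0" "\<forall>k\<in>S. (\<Sum>j\<in>J. dot n (w j) (V k) * c j) = 0" by blast
  define x where "x = (\<lambda>i. \<Sum>j\<in>J. c j * w j i)"
  have xs: "supp n x" unfolding x_def by (intro supp_sum supp_scale w)
  have dx: "dot n x (V k) = (\<Sum>j\<in>J. dot n (w j) (V k) * c j)" for k
    unfolding x_def by (simp add: dot_sum_left dot_scale_left mult.commute)
  have x0: "x \<noteq> (\<lambda>_. 0)"
  proof
    assume "x = (\<lambda>_. 0)"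
    then have "\<forall>i<n. (\<Sum>j\<in>J. c j * w j i) = 0" unfolding x_def by (simp add: fun_eq_iff)
    from indep[OF this] c(1) show False by blast
  qed
  have VV: "\<And>k. k < n \<Longrightarrow> dot n (V k) (V k) > 0"
    using EB unfolding EB_def by (auto intro: dot_self_pos)
  have "dot n x x > 0" by (rule dot_self_pos[OF xs x0])
  then have "(\<Sum>k<n. (dot n x (V k))^2 / dot n (V k) (V k)) \<noteq> 0"
    using rayleigh(2)[OF EB xs] by simp
  then obtain k0 where k0: "k0 < n" "dot n x (V k0) \<noteq> 0"
    by (metis (no_types, lifting) lessThan_iff sum.neutral zero_power2 div_0)
  have "k0 \<notin> S" using k0 dx c(2) by auto
  then have lk0: "lam k0 < real n - 2" using k0 unfolding S_def by auto
  define t where "t k = (lam k - (real n - 2)) * (dot n x (V k))^2 / dot n (V k) (V k)" for k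
  have tle: "t k \<le> 0" if "k < n" for k
  proof (cases "k \<in> S")
    case True
    then show ?thesis using dx c(2) unfolding t_def by simp
  next
    case False
    then have "lam k - (real n - 2) \<le> 0" using that unfolding S_def by auto
    moreover have "(dot n x (V k))^2 / dot n (V k) (V k) \<ge> 0" using VV[OF that] by simp
    ultimately have "(lam k - (real n - 2)) * ((dot n x (V k))^2 / dot n (V k) (V k)) \<le> 0"
      by (rule mult_nonpos_nonneg)
    then show ?thesis unfolding t_def by simp
  qed
  have "t k0 < 0"
  proof -
    have "(dot n x (V k0))^2 / dot n (V k0) (V k0) > 0" using VV[OF k0(1)] k0(2) by simp
    with lk0 have "(lam k0 - (real n - 2)) * ((dot n x (V k0))^2 / dot n (V k0) (V k0)) < 0"
      by (intro mult_neg_pos) auto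
    then show ?thesis unfolding t_def by simp
  qed
  moreover have "(\<Sum>k<n. t k) = t k0 + (\<Sum>k\<in>{..<n} - {k0}. t k)"
    using k0 by (simp add: sum.remove)
  moreover have "(\<Sum>k\<in>{..<n} - {k0}. t k) \<le> 0" using tle by (intro sum_nonpos) auto
  ultimately have "(\<Sum>k<n. t k) < 0" by linarith
  moreover have "F x = (\<Sum>k<n. t k)" unfolding t_def by (rule F_sum[OF EB xs])
  ultimately show False using Fnn[of c] unfolding x_def by simp
qed

lemma UB:
  assumes EB: "EB V lam" and T: "T \<subseteq> {..<n}" and I: "finite I" and lt: "card I < card T"
  shows "\<exists>x. supp n x \<and> x \<noteq> (\<lambda>_. 0) \<and> (\<forall>i\<in>I. dot n x (u i) = 0) \<and>
     ((\<forall>j\<in>T. lam j \<ge> real n - 2) \<longrightarrow> F x \<ge> 0) \<and> ((\<forall>j\<in>T. lam j > real n - 2) \<longrightarrow> F x > 0)"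
proof -
  have fT: "finite T" using T finite_subset by blast
  have V: "\<And>j. j < n \<Longrightarrow> supp n (V j) \<and> V j \<noteq> (\<lambda>_. 0)"
    and O: "\<And>j l. j < n \<Longrightarrow> l < n \<Longrightarrow> j \<noteq> l \<Longrightarrow> dot n (V j) (V l) = 0"
    using EB unfolding EB_def by auto
  have VV: "\<And>k. k < n \<Longrightarrow> dot n (V k) (V k) > 0" using V dot_self_pos by blast
  from homog[OF I fT lt, of "\<lambda>i j. dot n (V j) (u i)"] obtain c where
    c: "\<exists>j\<in>T. c j \<noteq> 0" "\<forall>i\<in>I. (\<Sum>j\<in>T. dot n (V j) (u i) * c j) = 0" by blast
  define x where "x = (\<lambda>i. \<Sum>j\<in>T. c j * V j i)"
  have xs: "supp n x" unfolding x_def using T V by (intro supp_sum supp_scale) auto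
  have xu: "\<forall>i\<in>I. dot n x (u i) = 0"
    using c(2) unfolding x_def by (simp add: dot_sum_left dot_scale_left mult.commute)
  have dk: "dot n x (V k) = (if k \<in> T then c k * dot n (V k) (V k) else 0)" if k: "k < n" for k
  proof -
    have "dot n x (V k) = (\<Sum>j\<in>T. c j * dot n (V j) (V k))"
      unfolding x_def by (simp add: dot_sum_left dot_scale_left)
    also have "\<dots> = (if k \<in> T then c k * dot n (V k) (V k) else 0)"
    proof (cases "k \<in> T")
      case True
      then show ?thesis using fT O T k by (simp add: sum.remove[of _ k] subset_iff sum.neutral)
    next
      case False
      have "\<forall>j\<in>T. c j * dot n (V j) (V k) = 0"
      proof
        fix j assume "j \<in> T"
        then have "j < n" "j \<noteq> k" using T False by auto
        then show "c j * dot n (V j) (V k) = 0" using O k by simp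
      qed
      then have "(\<Sum>j\<in>T. c j * dot n (V j) (V k)) = 0" by (rule sum.neutral)
      then show ?thesis using False by simp
    qed
    finally show ?thesis .
  qed
  have x0: "x \<noteq> (\<lambda>_. 0)"
  proof
    assume "x = (\<lambda>_. 0)"
    then have z: "\<And>i. i < n \<Longrightarrow> (\<Sum>j\<in>T. c j * V j i) = 0" unfolding x_def by (simp add: fun_eq_iff)
    have "c j = 0" if "j \<in> T" for j
      by (rule orth_indep[of T n V c j, OF fT _ _ z that]) (use V O T in auto)
    with c(1) show False by blast
  qed
  define t where "t k = (lam k - (real n - 2)) * (dot n x (V k))^2 / dot n (V k) (V k)" for k
  have Fx: "F x = (\<Sum>k<n. t k)" unfolding t_def by (rule F_sum[OF EB xs])
  have tk: "t k = (if k \<in> T then (lam k - (real n - 2)) * (c k)^2 * dot n (V k) (V k) else 0)"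
    if k: "k < n" for k
    using VV[OF k] unfolding t_def dk[OF k] by (simp add: power2_eq_square)
  have tnn: "t k \<ge> 0" if k: "k < n" and a: "\<forall>j\<in>T. lam j \<ge> real n - 2" for k
  proof (cases "k \<in> T")
    case True
    have "0 \<le> (lam k - (real n - 2)) * (c k)^2" using a True by simp
    moreover have "0 \<le> dot n (V k) (V k)" using VV[OF k] by simp
    ultimately show ?thesis using True by (simp add: tk[OF k])
  next
    case False then show ?thesis by (simp add: tk[OF k])
  qed
  have ge: "F x \<ge> 0" if "\<forall>j\<in>T. lam j \<ge> real n - 2"
    unfolding Fx using that tnn by (intro sum_nonneg) auto
  have gt: "F x > 0" if a: "\<forall>j\<in>T. lam j > real n - 2"
  proof -
    from c(1) obtain k0 where k0: "k0 \<in> T" "c k0 \<noteq> 0" by blast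
    then have k0n: "k0 < n" using T by auto
    have a': "\<forall>j\<in>T. lam j \<ge> real n - 2" using a by (simp add: less_imp_le)
    have "0 < (lam k0 - (real n - 2)) * (c k0)^2" using a k0 by simp
    then have "t k0 > 0" using VV[OF k0n] k0 by (simp add: tk[OF k0n])
    moreover have "(\<Sum>k<n. t k) = t k0 + (\<Sum>k\<in>{..<n} - {k0}. t k)"
      using k0n by (simp add: sum.remove)
    moreover have "(\<Sum>k\<in>{..<n} - {k0}. t k) \<ge> 0" using tnn a' by (intro sum_nonneg) auto
    ultimately show ?thesis unfolding Fx by linarith
  qed
  show ?thesis using xs x0 xu ge gt by blast
qed

definition ones :: "nat \<Rightarrow> real" where "ones = (\<lambda>i. if i < n then 1 else 0)"

lemma F_ones: "F x = (dot n x ones)^2 - RH n H x"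
  unfolding ones_def by (rule F_graph)

lemma EP_of_RH: assumes "RH n H x = 0" shows "EP x"
  unfolding EP_def
proof (intro allI impI)
  fix i j assume "H i j"
  then show "x i + x j = 0" using RH_zero[OF assms] H_lt by blast
qed

lemma bp_finite: assumes "C \<in> components n H" "bipartite_comp H C"
  shows "finite (BX C)" "finite (BY C)"
  using bp_parts(1)[OF assms(2)] comps_fin[OF assms(1)] by (metis finite_Un)+

lemma EP_side:
  assumes x: "EP x" and C: "C \<in> components n H" "bipartite_comp H C" and v: "v \<in> C"
  defines "\<sigma> \<equiv> (if v \<in> BX C then 1 else -1 :: real)"
  shows "dot n x (z C) = \<sigma> * x v * real (card C)"
    and "(\<Sum>u\<in>C. x u) = \<sigma> * x v * (real (card (BX C)) - real (card (BY C)))"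
proof -
  have e: "\<forall>u\<in>C. x u = (if (u \<in> BX C) = (v \<in> BX C) then x v else - x v)"
    by (rule EP_bip[OF x C v])
  note P = bp_parts[OF C(2)]
  have X: "x u = \<sigma> * x v" if "u \<in> BX C" for u
  proof -
    have "u \<in> C" using that P(1) by auto
    then have "x u = (if (u \<in> BX C) = (v \<in> BX C) then x v else - x v)" using e by blast
    then show ?thesis using that unfolding \<sigma>_def by (cases "v \<in> BX C") simp_all
  qed
  have Y: "x u = - \<sigma> * x v" if "u \<in> BY C" for u
  proof -
    have "u \<notin> BX C" using that P(2) by auto
    moreover have "u \<in> C" using that P(1) by auto
    then have "x u = (if (u \<in> BX C) = (v \<in> BX C) then x v else - x v)" using e by blast
    ultimately show ?thesis unfolding \<sigma>_def by (cases "v \<in> BX C") simp_all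
  qed
  have "(\<Sum>u\<in>BX C. x u) = (\<Sum>u\<in>BX C. \<sigma> * x v)"
    by (intro sum.cong refl) (rule X)
  then have sX: "(\<Sum>u\<in>BX C. x u) = real (card (BX C)) * (\<sigma> * x v)" by simp
  have "(\<Sum>u\<in>BY C. x u) = (\<Sum>u\<in>BY C. - \<sigma> * x v)"
    by (intro sum.cong refl) (rule Y)
  then have sY: "(\<Sum>u\<in>BY C. x u) = real (card (BY C)) * (- \<sigma> * x v)" by simp
  have cC: "card C = card (BX C) + card (BY C)"
    using card_Un_disjoint[OF bp_finite[OF C] P(2)] P(1) by simp
  show "dot n x (z C) = \<sigma> * x v * real (card C)"
    unfolding sum_z[OF C] sX sY cC by (simp add: algebra_simps)
  have "(\<Sum>u\<in>C. x u) = (\<Sum>u\<in>BX C. x u) + (\<Sum>u\<in>BY C. x u)"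
    using sum.union_disjoint[OF bp_finite[OF C] P(2)] P(1) by simp
  then show "(\<Sum>u\<in>C. x u) = \<sigma> * x v * (real (card (BX C)) - real (card (BY C)))"
    unfolding sX sY by (simp add: algebra_simps)
qed

lemma zero_on_comp:
  assumes x: "EP x" and v: "v < n"
    and d: "bipartite_comp H (comp v) \<Longrightarrow> dot n x (z (comp v)) = 0"
  shows "x v = 0"
proof (cases "bipartite_comp H (comp v)")
  case False
  then show ?thesis using EP_nonbip[OF x v] by simp
next
  case True
  have C: "comp v \<in> components n H" using comp_in[OF v] .
  have "card (comp v) > 0"
    using comps_fin[OF C] comp_self[of v] by (simp add: card_gt_0_iff) blast
  moreover have "(if v \<in> BX (comp v) then 1 else -1 :: real) * x v * real (card (comp v)) = 0"
    using EP_side(1)[OF x C True comp_self] d[OF True] by simp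
  ultimately show ?thesis by (auto split: if_splits)
qed

lemma zsum_edge:
  assumes C: "C \<in> components n H" "bipartite_comp H C" and e: "H i j"
  shows "z C i + z C j = 0"
proof (cases "i \<in> C")
  case True
  from bp_edge[OF C True e] bp_parts(2)[OF C(2)] show ?thesis unfolding z_def by auto
next
  case False
  have "j \<notin> C"
  proof
    assume "j \<in> C"
    then have "C = comp j" by (rule comps_mem[OF C(1)])
    moreover have "i \<in> comp j" using comp_edge H_sym e by metis
    ultimately show False using False by simp
  qed
  then show ?thesis using z_out[OF C] False by simp
qed

lemma z_at:
  assumes C: "C \<in> components n H" "bipartite_comp H C" and v: "v \<in> C"
    and B: "B \<subseteq> {C. C \<in> components n H \<and> bipartite_comp H C}" "C \<in> B" "finite B"
  shows "(\<Sum>D\<in>B. t D * z D v) = t C * z C v"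
proof -
  have "(\<Sum>D\<in>B. t D * z D v) = t C * z C v + (\<Sum>D\<in>B - {C}. t D * z D v)"
    using B by (simp add: sum.remove)
  moreover have "(\<Sum>D\<in>B - {C}. t D * z D v) = 0"
  proof (rule sum.neutral, rule ballI)
    fix D assume D: "D \<in> B - {C}"
    then have D': "D \<in> components n H" "bipartite_comp H D" using B by auto
    have "v \<notin> D" using comps_disj[OF C(1) D'(1) v] D by auto
    then show "t D * z D v = 0" using z_out[OF D'] by simp
  qed
  ultimately show ?thesis by simp
qed

lemma z_nonzero: assumes C: "bipartite_comp H C" and v: "v \<in> C" shows "z C v = 1 \<or> z C v = -1"
  using bp_parts(1)[OF C] v unfolding z_def by auto

lemma dot_z_ones: assumes C: "C \<in> components n H" "bipartite_comp H C"
  shows "dot n (z C) ones = real (card (BX C)) - real (card (BY C))"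
proof -
  have sub: "BX C \<subseteq> {..<n}" "BY C \<subseteq> {..<n}" using bp_parts(1)[OF C(2)] comps_sub[OF C(1)] by auto
  have "dot n (z C) ones = (\<Sum>u\<in>BX C. ones u) - (\<Sum>u\<in>BY C. ones u)"
    using sum_z[OF C, of ones] by (simp add: dot_comm)
  also have "(\<Sum>u\<in>BX C. ones u) = real (card (BX C))"
    using sub(1) unfolding ones_def by (simp add: subset_iff)
  also have "(\<Sum>u\<in>BY C. ones u) = real (card (BY C))"
    using sub(2) unfolding ones_def by (simp add: subset_iff)
  finally show ?thesis .
qed

abbreviation Bip where "Bip \<equiv> {C \<in> components n H. bipartite_comp H C}"
abbreviation Bal where "Bal \<equiv> {C \<in> components n H. balanced_comp H C}"

lemma Bip_finite: "finite Bip" using comps_finite by simp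

lemma P1: assumes EB: "EB V lam" shows "card {j. j < n \<and> lam j > real n - 2} \<le> 1"
proof (rule ccontr)
  define T where "T = {j. j < n \<and> lam j > real n - 2}"
  assume "\<not> card {j. j < n \<and> lam j > real n - 2} \<le> 1"
  then have "card {()} < card T" unfolding T_def by simp
  from UB[OF EB _ _ this, of "\<lambda>_. ones"] obtain x where
    x: "supp n x" "x \<noteq> (\<lambda>_. 0)" "dot n x ones = 0" "(\<forall>j\<in>T. lam j > real n - 2) \<longrightarrow> F x > 0"
    unfolding T_def by auto
  have "F x > 0" using x(4) unfolding T_def by auto
  moreover have "F x \<le> 0" using F_ones[of x] x(3) RH_nonneg[of n H x] by simp
  ultimately show False by simp
qed

lemma EP_zero_from_UB:
  assumes x: "supp n x" "dot n x ones = 0" "F x \<ge> 0"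
  shows "EP x"
proof -
  have "RH n H x \<le> 0" using F_ones[of x] x by simp
  then have "RH n H x = 0" using RH_nonneg[of n H x] by simp
  then show ?thesis by (rule EP_of_RH)
qed

lemma card_I: "finite B \<Longrightarrow> card (insert None (Some ` B)) = card B + 1"
  by (simp add: card_image)

lemma P4: assumes EB: "EB V lam" shows "card {j. j < n \<and> lam j \<ge> real n - 2} \<le> card Bip + 1"
proof (rule ccontr)
  define T where "T = {j. j < n \<and> lam j \<ge> real n - 2}"
  define I where "I = insert None (Some ` Bip)"
  define u where "u j = (case j of None \<Rightarrow> ones | Some C \<Rightarrow> z C)" for j
  assume "\<not> card {j. j < n \<and> lam j \<ge> real n - 2} \<le> card Bip + 1"
  then have "card I < card T" unfolding T_def I_def using card_I[OF Bip_finite] by simp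
  moreover have "T \<subseteq> {..<n}" unfolding T_def by auto
  moreover have "finite I" unfolding I_def using Bip_finite by simp
  ultimately obtain x where
    x: "supp n x" "x \<noteq> (\<lambda>_. 0)" "\<forall>i\<in>I. dot n x (u i) = 0" "(\<forall>j\<in>T. lam j \<ge> real n - 2) \<longrightarrow> F x \<ge> 0"
    using UB[OF EB, of T I u] by blast
  have o: "dot n x ones = 0" using x(3) unfolding I_def u_def by auto
  have zC: "dot n x (z C) = 0" if "C \<in> Bip" for C using x(3) that unfolding I_def u_def by auto
  have "F x \<ge> 0" using x(4) unfolding T_def by auto
  then have ep: "EP x" using EP_zero_from_UB[OF x(1) o] by simp
  have "x v = 0" for v
  proof (cases "v < n")
    case True
    show ?thesis by (rule zero_on_comp[OF ep True]) (use zC comp_in[OF True] in auto)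
  next
    case False then show ?thesis using x(1) unfolding supp_def by simp
  qed
  with x(2) show False by auto
qed

lemma P5: assumes EB: "EB V lam" and C0: "C0 \<in> Bip" "\<not> balanced_comp H C0"
  shows "card {j. j < n \<and> lam j \<ge> real n - 2} \<le> card Bip"
proof (rule ccontr)
  define T where "T = {j. j < n \<and> lam j \<ge> real n - 2}"
  define I where "I = insert None (Some ` (Bip - {C0}))"
  define u where "u j = (case j of None \<Rightarrow> ones | Some C \<Rightarrow> z C)" for j
  assume "\<not> card {j. j < n \<and> lam j \<ge> real n - 2} \<le> card Bip"
  moreover have "card I = card Bip"
  proof -
    have "card I = card (Bip - {C0}) + 1" unfolding I_def by (rule card_I) (simp add: Bip_finite)
    moreover have "card (Bip - {C0}) + 1 = card Bip"
    proof -
      have "card Bip > 0" using C0(1) Bip_finite by (auto simp: card_gt_0_iff)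
      then show ?thesis using card_Diff_singleton[OF C0(1)] by simp
    qed
    ultimately show ?thesis by simp
  qed
  ultimately have "card I < card T" unfolding T_def by simp
  moreover have "T \<subseteq> {..<n}" unfolding T_def by auto
  moreover have "finite I" unfolding I_def using Bip_finite by simp
  ultimately obtain x where
    x: "supp n x" "x \<noteq> (\<lambda>_. 0)" "\<forall>i\<in>I. dot n x (u i) = 0" "(\<forall>j\<in>T. lam j \<ge> real n - 2) \<longrightarrow> F x \<ge> 0"
    using UB[OF EB, of T I u] by blast
  have o: "dot n x ones = 0" using x(3) unfolding I_def u_def by auto
  have zC: "dot n x (z C) = 0" if "C \<in> Bip" "C \<noteq> C0" for C using x(3) that unfolding I_def u_def by auto
  have "F x \<ge> 0" using x(4) unfolding T_def by auto
  then have ep: "EP x" using EP_zero_from_UB[OF x(1) o] by simp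
  have C0c: "C0 \<in> components n H" "bipartite_comp H C0" using C0 by auto
  have out: "x v = 0" if "v \<notin> C0" for v
  proof (cases "v < n")
    case True
    have "comp v \<noteq> C0" using that comp_self[of v] by auto
    then show ?thesis by (intro zero_on_comp[OF ep True]) (use zC comp_in[OF True] in auto)
  next
    case False then show ?thesis using x(1) unfolding supp_def by simp
  qed
  have sub: "C0 \<subseteq> {..<n}" using comps_sub[OF C0c(1)] .
  have "dot n x ones = (\<Sum>i\<in>{..<n}. x i)" unfolding dot_def ones_def by simp
  also have "\<dots> = (\<Sum>i\<in>C0. x i)"
    using sub out by (intro sum.mono_neutral_right) auto
  finally have s0: "(\<Sum>i\<in>C0. x i) = 0" using o by simp
  have "x v = 0" if v: "v \<in> C0" for v
  proof -
    have "(if v \<in> BX C0 then 1 else -1 :: real) * x v * (real (card (BX C0)) - real (card (BY C0))) = 0"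
      using EP_side(2)[OF ep C0c v] s0 by simp
    moreover have "real (card (BX C0)) - real (card (BY C0)) \<noteq> 0"
      using unbal_card[OF C0c(2) C0(2)] by simp
    ultimately show ?thesis by (auto split: if_splits)
  qed
  with out have "x = (\<lambda>_. 0)" by auto
  with x(2) show False by simp
qed

lemma P2: assumes EB: "EB V lam" shows "card Bip \<le> card {j. j < n \<and> lam j \<ge> real n - 2}"
proof (rule LB[OF EB Bip_finite, of z])
  show "supp n (z C)" if "C \<in> Bip" for C using z_supp that by auto
next
  fix c assume h: "\<forall>i<n. (\<Sum>C\<in>Bip. c C * z C i) = 0"
  show "\<forall>C\<in>Bip. c C = 0"
  proof
    fix C assume C: "C \<in> Bip"
    then have Cc: "C \<in> components n H" "bipartite_comp H C" by auto
    obtain v where v: "v \<in> C" using comps_ne[OF Cc(1)] by auto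
    have vn: "v < n" using comps_sub[OF Cc(1)] v by auto
    have "(\<Sum>D\<in>Bip. c D * z D v) = c C * z C v" by (rule z_at[OF Cc v]) (use C Bip_finite in auto)
    then have "c C * z C v = 0" using h vn by simp
    then show "c C = 0" using z_nonzero[OF Cc(2) v] by auto
  qed
next
  fix c
  define x where "x = (\<lambda>i. \<Sum>C\<in>Bip. c C * z C i)"
  have "RH n H x = 0"
  proof (rule RH_EP)
    fix i j assume "i < n" "j < n" "H i j"
    have "x i + x j = (\<Sum>C\<in>Bip. c C * (z C i + z C j))"
      unfolding x_def by (simp add: sum.distrib algebra_simps)
    also have "\<dots> = 0" using zsum_edge \<open>H i j\<close> by (intro sum.neutral) auto
    finally show "x i + x j = 0" .
  qed
  then show "F x \<ge> 0" using F_ones[of x] by simp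
qed

lemma P3: assumes EB: "EB V lam" and BB: "Bal = Bip" and C0: "C0 \<in> Bip"
  shows "card Bip + 1 \<le> card {j. j < n \<and> lam j \<ge> real n - 2}"
proof -
  have C0c: "C0 \<in> components n H" "bipartite_comp H C0" using C0 by auto
  have bal: "card (BX C) = card (BY C)" if "C \<in> Bip" for C
    using bal_card that BB by blast
  note P0 = bp_parts[OF C0c(2)]
  define X where "X = BX C0"
  define Y where "Y = BY C0"
  have fX: "finite X" "finite Y" unfolding X_def Y_def using bp_finite[OF C0c] by auto
  have XY: "X \<union> Y = C0" "X \<inter> Y = {}" unfolding X_def Y_def using P0 by auto
  have cXY: "card X = card Y" unfolding X_def Y_def using bal[OF C0] .
  have "X \<noteq> {}"
  proof
    assume "X = {}"
    then have "Y = {}" using cXY fX by simp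
    then show False using XY \<open>X = {}\<close> comps_ne[OF C0c(1)] by simp
  qed
  then obtain p where p: "p \<in> X" by auto
  have "Y \<noteq> {}" using cXY fX \<open>X \<noteq> {}\<close> by auto
  then obtain q where q: "q \<in> Y" by auto
  define ind where "ind = (\<lambda>i. if i \<in> X then 1 else 0 :: real)"
  define indY where "indY = (\<lambda>i. if i \<in> Y then 1 else 0 :: real)"
  define J where "J = insert None (Some ` Bip)"
  define w where "w j = (case j of None \<Rightarrow> ind | Some C \<Rightarrow> z C)" for j
  have fJ: "finite J" unfolding J_def using Bip_finite by simp
  have sumJ: "(\<Sum>j\<in>J. c j * w j i) = c None * ind i + (\<Sum>C\<in>Bip. c (Some C) * z C i)" for c i
  proof -
    have "(\<Sum>j\<in>J. c j * w j i) = c None * w None i + (\<Sum>j\<in>Some ` Bip. c j * w j i)"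
      unfolding J_def using Bip_finite by (simp add: sum.insert)
    also have "(\<Sum>j\<in>Some ` Bip. c j * w j i) = (\<Sum>C\<in>Bip. c (Some C) * w (Some C) i)"
      using sum.reindex[of Some Bip "\<lambda>j. c j * w j i"] by (simp add: inj_on_def)
    finally show ?thesis unfolding w_def by simp
  qed
  have C0sub: "C0 \<subseteq> {..<n}" using comps_sub[OF C0c(1)] .
  have "card J \<le> card {j. j < n \<and> lam j \<ge> real n - 2}"
  proof (rule LB[OF EB fJ, of w])
    show "supp n (w j)" if "j \<in> J" for j
    proof (cases j)
      case None
      then show ?thesis unfolding w_def ind_def supp_def using C0sub XY by auto
    next
      case (Some C)
      then show ?thesis using that z_supp unfolding J_def w_def by auto
    qed
  next
    fix c assume h: "\<forall>i<n. (\<Sum>j\<in>J. c j * w j i) = 0"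
    then have h': "\<And>i. i < n \<Longrightarrow> c None * ind i + (\<Sum>C\<in>Bip. c (Some C) * z C i) = 0"
      using sumJ by simp
    have tC: "c (Some C) = 0" if C: "C \<in> Bip" "C \<noteq> C0" for C
    proof -
      have Cc: "C \<in> components n H" "bipartite_comp H C" using C by auto
      obtain v where v: "v \<in> C" using comps_ne[OF Cc(1)] by auto
      have vn: "v < n" using comps_sub[OF Cc(1)] v by auto
      have "v \<notin> C0" using comps_disj[OF Cc(1) C0c(1) v] C(2) by auto
      then have "ind v = 0" unfolding ind_def using XY by auto
      moreover have "(\<Sum>D\<in>Bip. c (Some D) * z D v) = c (Some C) * z C v"
        by (rule z_at[OF Cc v]) (use C Bip_finite in auto)
      ultimately have "c (Some C) * z C v = 0" using h'[OF vn] by simp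
      then show ?thesis using z_nonzero[OF Cc(2) v] by auto
    qed
    have qC0: "q \<in> C0" "p \<in> C0" using p q XY by auto
    have qn: "q < n" "p < n" using qC0 C0sub by auto
    have zq: "z C0 q = -1" using q XY unfolding z_def X_def Y_def by auto
    have zp: "z C0 p = 1" using p unfolding z_def X_def by auto
    have "ind q = 0" using q XY unfolding ind_def by auto
    moreover have "(\<Sum>D\<in>Bip. c (Some D) * z D q) = c (Some C0) * z C0 q"
      by (rule z_at[OF C0c qC0(1)]) (use C0 Bip_finite in auto)
    ultimately have t0: "c (Some C0) = 0" using h'[OF qn(1)] zq by simp
    have "ind p = 1" using p unfolding ind_def by auto
    moreover have "(\<Sum>D\<in>Bip. c (Some D) * z D p) = c (Some C0) * z C0 p"
      by (rule z_at[OF C0c qC0(2)]) (use C0 Bip_finite in auto)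
    ultimately have s0: "c None = 0" using h'[OF qn(2)] t0 by simp
    show "\<forall>j\<in>J. c j = 0"
    proof
      fix j assume "j \<in> J"
      then show "c j = 0" unfolding J_def using s0 t0 tC by (cases "j = Some C0") auto
    qed
  next
    fix c :: "nat set option \<Rightarrow> real"
    define s where "s = c None"
    define y where "y = (\<lambda>i. \<Sum>C\<in>Bip. c (Some C) * z C i)"
    define x where "x = (\<lambda>i. s * ind i + y i)"
    have xe: "(\<lambda>i. \<Sum>j\<in>J. c j * w j i) = x" unfolding x_def y_def s_def using sumJ by simp
    have dind: "dot n ind ones = real (card X)"
    proof -
      have "dot n ind ones = (\<Sum>i\<in>{..<n}. if i \<in> X then 1 else 0)"
        unfolding dot_def ind_def ones_def by (intro sum.cong refl) auto
      also have "\<dots> = (\<Sum>i\<in>{..<n} \<inter> X. 1)" using sum.inter_restrict[of "{..<n}" "\<lambda>_. 1::real" X] by simp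
      also have "{..<n} \<inter> X = X" using C0sub XY by auto
      finally show ?thesis by simp
    qed
    have dy: "dot n y ones = 0"
    proof -
      have "dot n y ones = (\<Sum>C\<in>Bip. c (Some C) * dot n (z C) ones)"
        unfolding y_def by (simp add: dot_sum_left dot_scale_left)
      also have "\<dots> = 0" using dot_z_ones bal by (intro sum.neutral) auto
      finally show ?thesis .
    qed
    have dx: "dot n x ones = s * real (card X)"
      unfolding x_def using dind dy by (simp add: dot_add_left dot_scale_left)
    have yedge: "y i + y j = 0" if "H i j" for i j
    proof -
      have "y i + y j = (\<Sum>C\<in>Bip. c (Some C) * (z C i + z C j))"
        unfolding y_def by (simp add: sum.distrib algebra_simps)
      also have "\<dots> = 0" using zsum_edge that by (intro sum.neutral) auto
      finally show ?thesis .
    qed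
    define g where "g i j = (if H i j then (x i + x j)^2 else 0)" for i j
    have gle: "g i j \<le> s^2 * (ind i * indY j + indY i * ind j)" for i j
    proof (cases "H i j")
      case False
      then show ?thesis unfolding g_def ind_def indY_def by auto
    next
      case True
      have xij: "x i + x j = s * (ind i + ind j)" unfolding x_def using yedge[OF True] by (simp add: algebra_simps)
      show ?thesis
      proof (cases "i \<in> C0")
        case True2: True
        from bp_edge[OF C0c True2 True] XY
        have "(i \<in> X \<and> j \<in> Y \<and> i \<notin> Y \<and> j \<notin> X) \<or> (i \<in> Y \<and> j \<in> X \<and> i \<notin> X \<and> j \<notin> Y)"
          unfolding X_def Y_def by blast
        then show ?thesis unfolding g_def xij ind_def indY_def using True by auto
      next
        case False
        have "j \<notin> C0"
        proof
          assume "j \<in> C0"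
          then have "C0 = comp j" by (rule comps_mem[OF C0c(1)])
          moreover have "i \<in> comp j" using comp_edge H_sym True by metis
          ultimately show False using False by simp
        qed
        then have "ind i = 0" "ind j = 0" using False XY unfolding ind_def by auto
        then show ?thesis unfolding g_def xij ind_def indY_def by auto
      qed
    qed
    have "(\<Sum>i<n. \<Sum>j<n. g i j) \<le> (\<Sum>i<n. \<Sum>j<n. s^2 * (ind i * indY j + indY i * ind j))"
      using gle by (intro sum_mono) auto
    also have "\<dots> = s^2 * (2 * ((\<Sum>i<n. ind i) * (\<Sum>j<n. indY j)))"
    proof -
      have A: "(\<Sum>i<n. \<Sum>j<n. ind i * indY j) = (\<Sum>i<n. ind i) * (\<Sum>j<n. indY j)"
        by (simp add: sum_product)
      have B: "(\<Sum>i<n. \<Sum>j<n. indY i * ind j) = (\<Sum>i<n. ind i) * (\<Sum>j<n. indY j)"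
        by (simp add: sum_product mult.commute)
      have "(\<Sum>i<n. \<Sum>j<n. s^2 * (ind i * indY j + indY i * ind j)) =
          s^2 * ((\<Sum>i<n. \<Sum>j<n. ind i * indY j) + (\<Sum>i<n. \<Sum>j<n. indY i * ind j))"
        by (simp only: distrib_left sum.distrib sum_distrib_left)
      then show ?thesis unfolding A B by simp
    qed
    also have "(\<Sum>i<n. ind i) = real (card X)"
    proof -
      have "(\<Sum>i<n. ind i) = (\<Sum>i\<in>{..<n} \<inter> X. 1)" unfolding ind_def using sum.inter_restrict[of "{..<n}" "\<lambda>_. 1::real" X] by simp
      also have "{..<n} \<inter> X = X" using C0sub XY by auto
      finally show ?thesis by simp
    qed
    also have "(\<Sum>j<n. indY j) = real (card Y)"
    proof -
      have "(\<Sum>i<n. indY i) = (\<Sum>i\<in>{..<n} \<inter> Y. 1)" unfolding indY_def using sum.inter_restrict[of "{..<n}" "\<lambda>_. 1::real" Y] by simp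
      also have "{..<n} \<inter> Y = Y" using C0sub XY by auto
      finally show ?thesis by simp
    qed
    finally have "RH n H x \<le> s^2 * (real (card X) * real (card Y))"
      unfolding RH_def g_def by simp
    then have "RH n H x \<le> (s * real (card X))^2" using cXY by (simp add: power2_eq_square mult_ac)
    then have "F x \<ge> 0" using F_ones[of x] dx by simp
    then show "F (\<lambda>i. \<Sum>j\<in>J. c j * w j i) \<ge> 0" unfolding xe .
  qed
  moreover have "card J = card Bip + 1" unfolding J_def by (rule card_I[OF Bip_finite])
  ultimately show ?thesis by simp
qed

end

theorem theorem2:
  fixes n k :: nat and E :: "nat \<Rightarrow> nat \<Rightarrow> bool"
  assumes "simple_graph n E" and "1 \<le> k" and "k < n"
  shows "q_eig n E (k + 1) = real n - 2 \<longleftrightarrow>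
    (card {C \<in> components n (complement n E). balanced_comp (complement n E) C} \<ge> k \<or>
     card {C \<in> components n (complement n E). bipartite_comp (complement n E) C} \<ge> k + 1)"
proof -
  interpret gr n E using assms(1) by unfold_locales
  define A where "A = signless_laplacian n E"
  have A: "A \<in> carrier_mat n n" unfolding A_def signless_laplacian_def by simp
  have S: "A $$ (i,j) = A $$ (j,i)" if "i < n" "j < n" for i j
    using that assms(1) unfolding A_def signless_laplacian_def simple_graph_def by auto
  from spectral_charpoly[OF A S] obtain V lam where
    EB0: "symm.EB n (\<lambda>i j. if i < n \<and> j < n then A $$ (i, j) else 0) V lam"
    and cp: "char_poly A = (\<Prod>x\<leftarrow>map lam [0..<n]. [:-x, 1:])" by blast
  have EB: "EB V lam" using EB0 unfolding A_def a_def[symmetric] .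
  define L where "L = map lam [0..<n]"
  have cpL: "char_poly A = (\<Prod>x\<leftarrow>L. [:-x, 1:])" using cp unfolding L_def .
  have "q_eig n E (k + 1) = rev (sort L) ! k"
    unfolding q_eig_def A_def[symmetric] cpL proots_lin_prod sorted_list_of_multiset_mset by simp
  also have "\<dots> = real n - 2 \<longleftrightarrow>
    card {i. i < length L \<and> L ! i > real n - 2} \<le> k \<and> k < card {i. i < length L \<and> L ! i \<ge> real n - 2}"
    by (rule sorted_rev_nth) (use assms(3) in \<open>simp add: L_def\<close>)
  also have "{i. i < length L \<and> L ! i > real n - 2} = {j. j < n \<and> lam j > real n - 2}"
    unfolding L_def by auto
  also have "{i. i < length L \<and> L ! i \<ge> real n - 2} = {j. j < n \<and> lam j \<ge> real n - 2}"
    unfolding L_def by auto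
  finally have q: "q_eig n E (k + 1) = real n - 2 \<longleftrightarrow>
      card {j. j < n \<and> lam j > real n - 2} \<le> k \<and> k < card {j. j < n \<and> lam j \<ge> real n - 2}" .
  define N where "N = card {j. j < n \<and> lam j \<ge> real n - 2}"
  have p1: "card {j. j < n \<and> lam j > real n - 2} \<le> k" using P1[OF EB] assms(2) by simp
  have sub: "Bal \<subseteq> Bip" using bal_bip by auto
  have cs: "card Bal \<le> card Bip" using card_mono[OF Bip_finite sub] .
  have "k + 1 \<le> N \<longleftrightarrow> (k \<le> card Bal \<or> k + 1 \<le> card Bip)"
  proof
    assume kN: "k + 1 \<le> N"
    show "k \<le> card Bal \<or> k + 1 \<le> card Bip"
    proof (cases "Bal = Bip")
      case True
      then show ?thesis using P4[OF EB] kN unfolding N_def by simp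
    next
      case False
      then obtain C0 where "C0 \<in> Bip" "\<not> balanced_comp H C0" using sub by blast
      from P5[OF EB this] kN show ?thesis unfolding N_def by simp
    qed
  next
    assume h: "k \<le> card Bal \<or> k + 1 \<le> card Bip"
    show "k + 1 \<le> N"
    proof (cases "k + 1 \<le> card Bip")
      case True
      then show ?thesis using P2[OF EB] unfolding N_def by simp
    next
      case False
      then have kb: "k \<le> card Bal" using h by simp
      show ?thesis
      proof (cases "Bal = Bip")
        case True
        have "Bip \<noteq> {}"
        proof
          assume e: "Bip = {}"
          have "card Bal = card Bip" using True by simp
          also have "\<dots> = 0" by (subst e) simp
          finally show False using kb assms(2) by simp
        qed
        then obtain C0 where "C0 \<in> Bip" by blast
        from P3[OF EB True this] kb True show ?thesis unfolding N_def by simp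
      next
        case False2: False
        then have "Bal \<subset> Bip" using sub by auto
        then have "card Bal < card Bip" using psubset_card_mono[OF Bip_finite] by blast
        then show ?thesis using kb False by simp
      qed
    qed
  qed
  then show ?thesis using q p1 unfolding N_def by auto
qed


end
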